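(* Under the setting and Hypothesis (H) of the context, fix $u,v\in\mathcal U$. Then for every $\rho\in(0,1)$ there exists a Borel set $I_\rho\subset[0,T]$ with Lebesgue measure $|I_\rho|=\rho T$ such that, defining for $t\in[0,T]$ $$\eta^*_t:=\rho\int_0^t\Delta b(s;v)\,ds-\int_{I_\rho\cap[0,t]}\Delta b(s;v)\,ds,$$ one has $\sup_{0\le t\le T}\mathbb E|\eta^*_t|^2=o(\rho^4)$ as $\rho\to0+$.
   Context: Let $T>0$, $(\Omega,\mathcal F,P)$ a complete probability space with a $d$-dimensional Brownian motion $B$ and its augmented natural filtration $(\mathcal F_t)$. $\mathcal P_2(\mathbb R^n)$: probability measures on $\mathbb R^n$ with finite second moment, 2-Wasserstein metric; $P_\xi$ is the law of $\xi$; measure derivatives are Lions derivatives. $U\subset\mathbb R^k$; $\mathcal U$: $(\mathcal F_t)$-adapted $U$-valued processes $v$ with $\sup_t\mathbb E|v_t|^8<\infty$. Coefficients $b:[0,T]\times\mathbb R^n\times\mathcal P_2(\mathbb R^n)\times U\to\mathbb R^n$, $\sigma:[0,T]\times\mathbb R^n\times\mathcal P_2(\mathbb R^n)\to\mathbb R^{n\times d}$, $h,\Phi$ real valued, satisfying Hypothesis (H): (1) $b,\sigma,h,\Phi$ differentiable in $(x,\mu,v)$, $b,\sigma$ Lipschitz in $(x,\mu,v)$; (2) first-order $(x,\mu)$-derivatives of $b,\sigma$ Lipschitz and bounded; (3) first-order $(x,\mu)$-derivatives of $h,\Phi$ Lipschitz and bounded by $C(1+|x|+|v|)$; (4) second-order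 $(x,\mu)$-derivatives of $b,\sigma,h,\Phi$ continuous, bounded and Borel in $(t,x,\mu,v)$. $X^u$ solves $dX_t=b(t,X_t,P_{X_t},u_t)dt+\sigma(t,X_t,P_{X_t})dB_t$, $X_0=x$. $\Delta b(t;v):=b(t,X^u_t,P_{X^u_t},v_t)-b(t,X^u_t,P_{X^u_t},u_t)$. *)

theory Defs
  imports "HOL-Probability.Probability"
begin

definition law :: "'a measure \<Rightarrow> ('a \<Rightarrow> 'b::topological_space) \<Rightarrow> 'b measure" where
  "law M \<xi> = distr M borel \<xi>"

definition P2 :: "('b::real_normed_vector) measure set" where
  "P2 = {\<mu>. sets \<mu> = sets borel \<and> prob_space \<mu> \<and> (\<integral>\<^sup>+ x. ennreal (norm x ^ 2) \<partial>\<mu>) < \<infinity>}"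

definition Delta_b ::
  "'a measure \<Rightarrow> (real \<Rightarrow> 'n \<Rightarrow> 'n measure \<Rightarrow> 'k \<Rightarrow> 'n::real_normed_vector)
   \<Rightarrow> (real \<Rightarrow> 'a \<Rightarrow> 'n) \<Rightarrow> (real \<Rightarrow> 'a \<Rightarrow> 'k) \<Rightarrow> (real \<Rightarrow> 'a \<Rightarrow> 'k) \<Rightarrow> real \<Rightarrow> 'a \<Rightarrow> 'n" where
  "Delta_b M b X u v t \<omega> =
     b t (X t \<omega>) (law M (X t)) (v t \<omega>) - b t (X t \<omega>) (law M (X t)) (u t \<omega>)"

definition couplings :: "'b::topological_space measure \<Rightarrow> 'b measure \<Rightarrow> ('b \<times> 'b) measure set" where
  "couplings \<mu> \<nu> = {\<pi>. sets \<pi> = sets borel \<and> prob_space \<pi> \<and>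
      distr \<pi> borel fst = \<mu> \<and> distr \<pi> borel snd = \<nu>}"

definition W2 :: "'b::real_normed_vector measure \<Rightarrow> 'b measure \<Rightarrow> real" where
  "W2 \<mu> \<nu> = sqrt (enn2real (INF \<pi>\<in>couplings \<mu> \<nu>. \<integral>\<^sup>+ p. ennreal (norm (fst p - snd p) ^ 2) \<partial>\<pi>))"

end

theory Submission
  imports Defs
begin



lemma W2_self:
  fixes \<mu> :: "('b::{real_normed_vector, second_countable_topology}) measure"
  assumes "\<mu> \<in> P2"
  shows "W2 \<mu> \<mu> = 0"
proof -
  have sets: "sets \<mu> = sets borel" and ps: "prob_space \<mu>" using assms by (auto simp: P2_def)
  define \<pi> where "\<pi> = distr \<mu> borel (\<lambda>x. (x, x))"
  have mdiag: "(\<lambda>x. (x, x)) \<in> measurable \<mu> borel"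
    using sets by (simp add: measurable_cong_sets[OF sets refl] borel_measurable_continuous_onI continuous_on_Pair continuous_on_id)
  have "\<pi> \<in> couplings \<mu> \<mu>"
    unfolding couplings_def
  proof (intro CollectI conjI)
    show "sets \<pi> = sets borel" by (simp add: \<pi>_def)
    show "prob_space \<pi>" unfolding \<pi>_def by (rule prob_space.prob_space_distr[OF ps mdiag])
    have "distr \<pi> borel fst = distr \<mu> borel (fst \<circ> (\<lambda>x. (x, x)))"
      unfolding \<pi>_def by (rule distr_distr) (auto simp: mdiag intro!: borel_measurable_continuous_onI continuous_intros)
    also have "\<dots> = \<mu>" by (simp add: comp_def distr_id2 sets)
    finally show "distr \<pi> borel fst = \<mu>" .
    have "distr \<pi> borel snd = distr \<mu> borel (snd \<circ> (\<lambda>x. (x, x)))"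
      unfolding \<pi>_def by (rule distr_distr) (auto simp: mdiag intro!: borel_measurable_continuous_onI continuous_intros)
    also have "\<dots> = \<mu>" by (simp add: comp_def distr_id2 sets)
    finally show "distr \<pi> borel snd = \<mu>" .
  qed
  moreover have "(\<integral>\<^sup>+ p. ennreal (norm (fst p - snd p) ^ 2) \<partial>\<pi>) = 0"
    unfolding \<pi>_def by (subst nn_integral_distr[OF mdiag]) (auto intro!: borel_measurable_continuous_onI continuous_intros)
  ultimately have "(INF \<pi>\<in>couplings \<mu> \<mu>. \<integral>\<^sup>+ p. ennreal (norm (fst p - snd p) ^ 2) \<partial>\<pi>) = 0"
    by (metis (no_types, lifting) INF_lower bot.extremum_uniqueI bot_ennreal)
  then show ?thesis by (simp add: W2_def)
qed

lemma law_P2: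
  fixes Y :: "'a \<Rightarrow> 'b::{real_normed_vector, second_countable_topology}"
  assumes "prob_space M" "Y \<in> borel_measurable M" "(\<integral>\<^sup>+ \<omega>. ennreal (norm (Y \<omega>) ^ 2) \<partial>M) \<le> ennreal C"
  shows "law M Y \<in> P2"
  unfolding P2_def law_def
proof (intro CollectI conjI)
  show "sets (distr M borel Y) = sets borel" by simp
  show "prob_space (distr M borel Y)" by (rule prob_space.prob_space_distr[OF assms(1,2)])
  have "(\<integral>\<^sup>+ x. ennreal (norm x ^ 2) \<partial>distr M borel Y) = (\<integral>\<^sup>+ \<omega>. ennreal (norm (Y \<omega>) ^ 2) \<partial>M)"
    by (subst nn_integral_distr[OF assms(2)]) auto
  also have "\<dots> < \<infinity>" using assms(3) by (simp add: le_less_trans)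
  finally show "(\<integral>\<^sup>+ x. ennreal (norm x ^ 2) \<partial>distr M borel Y) < \<infinity>" .
qed



lemma cs_int:
  fixes f :: "real \<Rightarrow> 'b::euclidean_space" and \<psi> :: "real \<Rightarrow> real"
  assumes f[measurable]: "f \<in> borel_measurable lborel" and \<psi>[measurable]: "\<psi> \<in> borel_measurable lborel"
    and C[measurable]: "C \<in> sets lborel" and z: "\<And>s. s \<notin> C \<Longrightarrow> \<psi> s = 0"
  shows "ennreal (norm (\<integral>s. \<psi> s *\<^sub>R f s \<partial>lborel) ^ 2)
     \<le> (\<integral>\<^sup>+ s. ennreal ((\<psi> s)^2) \<partial>lborel) * (\<integral>\<^sup>+ s. indicator C s * ennreal (norm (f s) ^ 2) \<partial>lborel)"
proof (cases "integrable lborel (\<lambda>s. \<psi> s *\<^sub>R f s)")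
  case False
  then show ?thesis by (simp add: not_integrable_integral_eq)
next
  case True
  have "ennreal (norm (\<integral>s. \<psi> s *\<^sub>R f s \<partial>lborel) ^ 2) = (ennreal (norm (\<integral>s. \<psi> s *\<^sub>R f s \<partial>lborel))) ^ 2"
    by (simp add: ennreal_power)
  also have "\<dots> \<le> (\<integral>\<^sup>+ s. ennreal (norm (\<psi> s *\<^sub>R f s)) \<partial>lborel) ^ 2"
    by (intro power_mono integral_norm_bound_ennreal True) simp
  also have "(\<integral>\<^sup>+ s. ennreal (norm (\<psi> s *\<^sub>R f s)) \<partial>lborel)
      = (\<integral>\<^sup>+ s. ennreal \<bar>\<psi> s\<bar> * ennreal (indicator C s * norm (f s)) \<partial>lborel)"
    by (intro nn_integral_cong) (auto simp: ennreal_mult[symmetric] z indicator_def)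
  also have "(\<dots>) ^ 2 \<le> (\<integral>\<^sup>+ s. ennreal \<bar>\<psi> s\<bar> ^ 2 \<partial>lborel) * (\<integral>\<^sup>+ s. ennreal (indicator C s * norm (f s)) ^ 2 \<partial>lborel)"
    by (rule Cauchy_Schwarz_nn_integral) auto
  also have "(\<integral>\<^sup>+ s. ennreal \<bar>\<psi> s\<bar> ^ 2 \<partial>lborel) = (\<integral>\<^sup>+ s. ennreal ((\<psi> s)^2) \<partial>lborel)"
    by (intro nn_integral_cong) (simp add: ennreal_power)
  also have "(\<integral>\<^sup>+ s. ennreal (indicator C s * norm (f s)) ^ 2 \<partial>lborel) = (\<integral>\<^sup>+ s. indicator C s * ennreal (norm (f s) ^ 2) \<partial>lborel)"
    by (intro nn_integral_cong) (auto simp: ennreal_power indicator_def)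
  finally show ?thesis .
qed


lemma mod_sum_if: fixes i j m :: nat assumes "i < m" "j < m"
  shows "(i + j) mod m = (if i + j < m then i + j else i + j - m)"
proof (cases "i + j < m")
  case False
  then have "(i+j) mod m = (i + j - m) mod m" by (simp add: mod_if)
  also have "\<dots> = i + j - m" using assms by simp
  finally show ?thesis using False by simp
qed simp

lemma card_cyclic:
  fixes m q i :: nat
  assumes "i < m" "q \<le> m"
  shows "card {j\<in>{..<m}. (i + j) mod m < q} = q"
proof -
  define g where "g = (\<lambda>j. (i + j) mod m)"
  have inj: "inj_on g {..<m}"
    unfolding inj_on_def g_def using assms(1)
    by (auto simp: mod_sum_if split: if_splits)
  have img: "g ` {..<m} = {..<m}"
    by (rule endo_inj_surj) (use inj assms in \<open>auto simp: g_def\<close>)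
  have "g ` {j\<in>{..<m}. g j < q} = {l\<in>{..<m}. l < q}"
    using img by auto
  moreover have "card (g ` {j\<in>{..<m}. g j < q}) = card {j\<in>{..<m}. g j < q}"
    by (rule card_image) (rule inj_on_subset[OF inj], auto)
  moreover have "{l\<in>{..<m}. l < q} = {..<q}" using assms by auto
  ultimately show ?thesis by (simp add: g_def)
qed




lemma ix_ge: fixes w s :: real assumes "w > 0" "0 \<le> s"
  shows "(N \<le> nat \<lfloor>s / w\<rfloor>) \<longleftrightarrow> real N * w \<le> s"
proof -
  have h0: "0 \<le> \<lfloor>s / w\<rfloor>" using assms by simp
  have "(N \<le> nat \<lfloor>s / w\<rfloor>) \<longleftrightarrow> int N \<le> \<lfloor>s / w\<rfloor>" using le_nat_iff[OF h0] .
  also have "\<dots> \<longleftrightarrow> real N \<le> s / w" by (simp add: le_floor_iff)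
  also have "\<dots> \<longleftrightarrow> real N * w \<le> s" using assms by (simp add: le_divide_eq)
  finally show ?thesis .
qed

lemma ix_less: fixes w s :: real assumes "w > 0" "0 \<le> s"
  shows "(nat \<lfloor>s / w\<rfloor> < N) \<longleftrightarrow> s < real N * w"
  using ix_ge[OF assms, of N] by linarith

lemma grid_eq:
  fixes w :: real assumes w: "w > 0"
  shows "{s. 0 \<le> s \<and> nat \<lfloor>s / w\<rfloor> \<in> Q} = (\<Union>p\<in>Q. {real p * w ..< real (Suc p) * w})"
  proof (intro set_eqI iffI)
  fix s assume "s \<in> {s. 0 \<le> s \<and> nat \<lfloor>s / w\<rfloor> \<in> Q}"
  then have s: "0 \<le> s" "nat \<lfloor>s / w\<rfloor> \<in> Q" by auto
  then show "s \<in> (\<Union>p\<in>Q. {real p * w ..< real (Suc p) * w})"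
    using ix_ge[OF w s(1), of "nat \<lfloor>s / w\<rfloor>"] ix_less[OF w s(1), of "Suc (nat \<lfloor>s / w\<rfloor>)"]
    by (intro UN_I[of "nat \<lfloor>s / w\<rfloor>"]) auto
next
  fix s assume "s \<in> (\<Union>p\<in>Q. {real p * w ..< real (Suc p) * w})"
  then obtain p where p: "p \<in> Q" "real p * w \<le> s" "s < real (Suc p) * w" by auto
  have s0: "0 \<le> s" using p w by (meson mult_nonneg_nonneg of_nat_0_le_iff less_imp_le order_trans)
  have "nat \<lfloor>s / w\<rfloor> = p"
    using ix_ge[OF w s0, of p] ix_less[OF w s0, of "Suc p"] p by auto
  then show "s \<in> {s. 0 \<le> s \<and> nat \<lfloor>s / w\<rfloor> \<in> Q}" using p s0 by auto
qed

lemma grid_borel: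
  fixes w :: real assumes w: "w > 0"
  shows "{s. 0 \<le> s \<and> nat \<lfloor>s / w\<rfloor> \<in> Q} \<in> sets borel"
  unfolding grid_eq[OF w] by (intro sets.countable_UN') auto

lemma measure_grid:
  fixes w :: real assumes w: "w > 0" and Q: "finite Q"
  shows "measure lborel {s. 0 \<le> s \<and> nat \<lfloor>s / w\<rfloor> \<in> Q} = real (card Q) * w"
proof -
  have eq: "{s. 0 \<le> s \<and> nat \<lfloor>s / w\<rfloor> \<in> Q} = (\<Union>p\<in>Q. {real p * w ..< real (Suc p) * w})"
    by (rule grid_eq[OF w])
  have disj: "disjoint_family_on (\<lambda>p. {real p * w ..< real (Suc p) * w}) Q"
    unfolding disjoint_family_on_def
  proof (intro ballI impI, rule ccontr)
    fix p p' assume pp: "p \<in> Q" "p' \<in> Q" "p \<noteq> p'"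
    assume ne: "{real p * w ..< real (Suc p) * w} \<inter> {real p' * w ..< real (Suc p') * w} \<noteq> {}"
    then obtain s where "s \<in> {real p * w ..< real (Suc p) * w} \<inter> {real p' * w ..< real (Suc p') * w}" by blast
    then have s: "real p * w \<le> s" "s < real (Suc p) * w" "real p' * w \<le> s" "s < real (Suc p') * w" by auto
    have s0: "0 \<le> s" using s w by (meson mult_nonneg_nonneg of_nat_0_le_iff less_imp_le order_trans)
    have "nat \<lfloor>s / w\<rfloor> = p"
      using ix_ge[OF w s0, of p] ix_less[OF w s0, of "Suc p"] s by auto
    moreover have "nat \<lfloor>s / w\<rfloor> = p'"
      using ix_ge[OF w s0, of p'] ix_less[OF w s0, of "Suc p'"] s by auto
    ultimately show False using pp by simp
  qed
  have "measure lborel (\<Union>p\<in>Q. {real p * w ..< real (Suc p) * w}) = (\<Sum>p\<in>Q. measure lborel {real p * w ..< real (Suc p) * w})"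
    by (rule measure_finite_Union[OF Q _ disj]) (use w in \<open>auto simp: emeasure_lborel_Ico mult_right_mono\<close>)
  also have "\<dots> = (\<Sum>p\<in>Q. w)"
    using w by (intro sum.cong refl) (simp add: algebra_simps)
  finally show ?thesis using eq by simp
qed

lemma sum_sq:
  fixes x :: "'v::real_inner" and d :: "nat \<Rightarrow> 'v"
  assumes "finite J" "(\<Sum>j\<in>J. d j) = 0"
  shows "(\<Sum>j\<in>J. norm (x + d j) ^ 2) = real (card J) * norm x ^ 2 + (\<Sum>j\<in>J. norm (d j) ^ 2)"
proof -
  have "(\<Sum>j\<in>J. norm (x + d j) ^ 2) = (\<Sum>j\<in>J. norm x ^ 2 + 2 * inner x (d j) + norm (d j) ^ 2)"
    by (intro sum.cong refl) (simp add: power2_norm_eq_inner inner_add_left inner_add_right inner_commute)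
  also have "\<dots> = real (card J) * norm x ^ 2 + 2 * inner x (\<Sum>j\<in>J. d j) + (\<Sum>j\<in>J. norm (d j) ^ 2)"
    by (simp add: sum.distrib inner_sum_right sum_distrib_left)
  finally show ?thesis using assms by simp
qed

lemma card_Ip:
  fixes m q :: nat and c :: "nat \<Rightarrow> nat"
  assumes "q \<le> m" "0 < m"
  shows "card {p. p div m < m \<and> (p mod m + c (p div m)) mod m < q} = m * q"
proof -
  let ?Q = "{p. p div m < m \<and> (p mod m + c (p div m)) mod m < q}"
  let ?S = "SIGMA k:{..<m}. {i\<in>{..<m}. (i + c k) mod m < q}"
  have "bij_betw (\<lambda>p. (p div m, p mod m)) ?Q ?S"
  proof (rule bij_betw_byWitness[where f' = "\<lambda>(k, i). k * m + i"])
    show "\<forall>a\<in>?Q. (\<lambda>(k, i). k * m + i) (a div m, a mod m) = a" by simp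
    show "\<forall>a'\<in>?S. (\<lambda>p. (p div m, p mod m)) ((\<lambda>(k, i). k * m + i) a') = a'"
      using assms by auto
    show "(\<lambda>p. (p div m, p mod m)) ` ?Q \<subseteq> ?S" using assms by auto
    show "(\<lambda>(k, i). k * m + i) ` ?S \<subseteq> ?Q" using assms by auto
  qed
  then have "card ?Q = card ?S" by (rule bij_betw_same_card)
  also have "\<dots> = (\<Sum>k<m. card {i\<in>{..<m}. (i + c k) mod m < q})" by (rule card_SigmaI) auto
  also have "\<dots> = (\<Sum>k<m. q)"
  proof (intro sum.cong refl)
    fix k
    have "{i\<in>{..<m}. (i + c k) mod m < q} = {i\<in>{..<m}. (c k mod m + i) mod m < q}"
      by (auto simp: mod_add_right_eq add.commute)
    also have "card \<dots> = q" by (rule card_cyclic) (use assms in auto)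
    finally show "card {i\<in>{..<m}. (i + c k) mod m < q} = q" .
  qed
  finally show ?thesis by simp
qed



lemma Icc_fmeas: "{a..b::real} \<in> fmeasurable lborel"
  by (intro fmeasurableI) (auto simp: emeasure_lborel_Icc_eq)

lemma fill_set:
  fixes T y :: real and Ip :: "real set"
  assumes T: "T > 0" and Ip: "Ip \<in> sets borel" "Ip \<subseteq> {0..T}"
    and y: "0 \<le> y" "y \<le> T - measure lborel Ip"
  shows "\<exists>J. J \<in> sets borel \<and> J \<subseteq> {0..T} \<and> J \<inter> Ip = {} \<and> measure lborel J = y"
proof -
  define \<phi> where "\<phi> x = measure lborel ({0..x} - Ip)" for x
  have sb: "{0..x} - Ip \<in> sets lborel" for x using Ip by auto
  have fm: "{0..x} - Ip \<in> fmeasurable lborel" for x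
    by (rule fmeasurableI2[OF Icc_fmeas[of 0 x]]) (use sb in auto)
  have lip: "\<phi> x \<le> \<phi> x' \<and> \<phi> x' \<le> \<phi> x + (x' - x)" if "x \<le> x'" for x x'
  proof
    show "\<phi> x \<le> \<phi> x'" unfolding \<phi>_def
      by (rule measure_mono_fmeasurable[OF _ _ fm]) (use that sb in auto)
    have "\<phi> x' \<le> measure lborel (({0..x} - Ip) \<union> {x..x'})" unfolding \<phi>_def
      by (rule measure_mono_fmeasurable) (use sb fm in \<open>auto intro: fmeasurable.Un Icc_fmeas\<close>)
    also have "\<dots> \<le> \<phi> x + measure lborel {x..x'}" unfolding \<phi>_def
      by (rule measure_Un_le) (use sb in auto)
    also have "measure lborel {x..x'} = x' - x" using that by simp
    finally show "\<phi> x' \<le> \<phi> x + (x' - x)" .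
  qed
  have "1-lipschitz_on {0..T} \<phi>"
  proof (rule lipschitz_onI)
    fix x x' :: real
    show "dist (\<phi> x) (\<phi> x') \<le> 1 * dist x x'"
      using lip[of x x'] lip[of x' x] by (cases "x \<le> x'") (auto simp: dist_real_def)
  qed simp
  then have cont: "continuous_on {0..T} \<phi>" by (rule lipschitz_on_continuous_on)
  have "\<phi> 0 \<le> measure lborel {0..0::real}" unfolding \<phi>_def
    by (rule measure_mono_fmeasurable[OF _ sb Icc_fmeas]) auto
  then have phi0: "\<phi> 0 = 0" unfolding \<phi>_def by (simp add: measure_nonneg antisym)
  have "T = measure lborel {0..T}" using T by simp
  also have "\<dots> \<le> measure lborel (({0..T} - Ip) \<union> Ip)"
    by (rule measure_mono_fmeasurable) (use sb fm Ip in \<open>auto intro: fmeasurable.Un fmeasurableI2[OF Icc_fmeas[of 0 T]]\<close>)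
  also have "\<dots> \<le> \<phi> T + measure lborel Ip" unfolding \<phi>_def
    by (rule measure_Un_le) (use sb Ip in auto)
  finally have phiT: "y \<le> \<phi> T" using y by simp
  obtain x where x: "0 \<le> x" "x \<le> T" "\<phi> x = y"
    using IVT'[of \<phi> 0 y T] phi0 phiT y T cont by auto
  show ?thesis
    by (rule exI[of _ "{0..x} - Ip"]) (use x sb in \<open>auto simp: \<phi>_def\<close>)
qed

locale core_setup =
  fixes M :: "'a measure" and T :: real and Fz :: "real \<Rightarrow> 'a \<Rightarrow> 'b::euclidean_space" and K0 :: real
  assumes prob: "prob_space M" and T_pos: "T > 0"
    and Fmeas: "(\<lambda>x. Fz (snd x) (fst x)) \<in> borel_measurable (M \<Otimes>\<^sub>M lborel)"
    and Fzero: "\<And>s \<omega>. s \<notin> {0..T} \<Longrightarrow> Fz s \<omega> = 0"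
    and K0: "K0 \<ge> 0"
    and Fbound: "\<And>s. s \<in> {0..T} \<Longrightarrow> (\<integral>\<^sup>+\<omega>. ennreal (norm (Fz s \<omega>) ^ 2) \<partial>M) \<le> ennreal K0"
begin

interpretation P: pair_sigma_finite M lborel
  using prob by (simp add: pair_sigma_finite_def prob_space_imp_sigma_finite lborel.sigma_finite_measure_axioms)

lemma Fmeas2[measurable]: "(\<lambda>x. Fz (snd x) (fst x)) \<in> borel_measurable (M \<Otimes>\<^sub>M lborel)"
  by (rule Fmeas)

lemma Fs_meas[measurable]: "\<omega> \<in> space M \<Longrightarrow> (\<lambda>s. Fz s \<omega>) \<in> borel_measurable lborel"
  using measurable_Pair2[OF Fmeas] by simp

lemma Jt_meas[measurable]:
  assumes [measurable]: "\<psi> \<in> borel_measurable lborel"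
  shows "(\<lambda>\<omega>. \<integral>s. \<psi> s *\<^sub>R Fz s \<omega> \<partial>lborel) \<in> borel_measurable M"
proof -
  have "(\<lambda>x. \<psi> (snd x) *\<^sub>R Fz (snd x) (fst x)) \<in> borel_measurable (M \<Otimes>\<^sub>M lborel)"
    by measurable
  then show ?thesis
    by (intro lborel.borel_measurable_lebesgue_integral) (simp add: case_prod_beta')
qed

lemma nnF_meas[measurable]:
  assumes [measurable]: "C \<in> sets lborel"
  shows "(\<lambda>\<omega>. \<integral>\<^sup>+s. indicator C s * ennreal (norm (Fz s \<omega>) ^ 2) \<partial>lborel) \<in> borel_measurable M"
proof -
  have "(\<lambda>x. indicator C (snd x) * ennreal (norm (Fz (snd x) (fst x)) ^ 2)) \<in> borel_measurable (M \<Otimes>\<^sub>M lborel)"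
    by measurable
  then show ?thesis
    by (intro lborel.borel_measurable_nn_integral) (simp add: case_prod_beta')
qed

lemma cell_bound:
  assumes [measurable]: "C \<in> sets lborel" and CT: "C \<subseteq> {0..T}"
  shows "(\<integral>\<^sup>+\<omega>. \<integral>\<^sup>+s. indicator C s * ennreal (norm (Fz s \<omega>) ^ 2) \<partial>lborel \<partial>M) \<le> emeasure lborel C * ennreal K0"
proof -
  have m: "(\<lambda>x. indicator C (snd x) * ennreal (norm (Fz (snd x) (fst x)) ^ 2)) \<in> borel_measurable (M \<Otimes>\<^sub>M lborel)"
    by measurable
  have "(\<integral>\<^sup>+\<omega>. \<integral>\<^sup>+s. indicator C s * ennreal (norm (Fz s \<omega>) ^ 2) \<partial>lborel \<partial>M)
      = (\<integral>\<^sup>+s. \<integral>\<^sup>+\<omega>. indicator C s * ennreal (norm (Fz s \<omega>) ^ 2) \<partial>M \<partial>lborel)"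
    using P.Fubini[OF m] by simp
  also have "\<dots> = (\<integral>\<^sup>+s. indicator C s * (\<integral>\<^sup>+\<omega>. ennreal (norm (Fz s \<omega>) ^ 2) \<partial>M) \<partial>lborel)"
  proof (intro nn_integral_cong)
    fix s
    have "(\<lambda>\<omega>. Fz s \<omega>) \<in> borel_measurable M"
      using measurable_Pair1[OF Fmeas, of s] by simp
    then show "(\<integral>\<^sup>+\<omega>. indicator C s * ennreal (norm (Fz s \<omega>) ^ 2) \<partial>M) = indicator C s * (\<integral>\<^sup>+\<omega>. ennreal (norm (Fz s \<omega>) ^ 2) \<partial>M)"
      by (intro nn_integral_cmult) auto
  qed
  also have "\<dots> \<le> (\<integral>\<^sup>+s. indicator C s * ennreal K0 \<partial>lborel)"
    using CT Fbound by (intro nn_integral_mono) (auto simp: indicator_def mult_left_mono)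
  also have "\<dots> = (\<integral>\<^sup>+s. ennreal K0 * indicator C s \<partial>lborel)"
    by (intro nn_integral_cong) (simp add: mult.commute)
  also have "\<dots> = ennreal K0 * emeasure lborel C"
    by (rule nn_integral_cmult_indicator) (use assms(1) in simp)
  finally show ?thesis by (simp add: mult.commute)
qed


lemma good_AE: "AE \<omega> in M. integrable lborel (\<lambda>s. Fz s \<omega>)"
proof -
  have "(\<integral>\<^sup>+\<omega>. \<integral>\<^sup>+s. indicator {0..T} s * ennreal (norm (Fz s \<omega>) ^ 2) \<partial>lborel \<partial>M) \<le> emeasure lborel {0..T} * ennreal K0"
    by (rule cell_bound) auto
  also have "\<dots> < \<infinity>" using T_pos by (simp add: ennreal_mult_less_top)
  finally have "AE \<omega> in M. (\<integral>\<^sup>+s. indicator {0..T} s * ennreal (norm (Fz s \<omega>) ^ 2) \<partial>lborel) \<noteq> \<infinity>"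
    by (intro nn_integral_PInf_AE) auto
  then show ?thesis
  proof (rule AE_mp, intro AE_I2 impI)
    fix \<omega> assume \<omega>: "\<omega> \<in> space M" and fin: "(\<integral>\<^sup>+s. indicator {0..T} s * ennreal (norm (Fz s \<omega>) ^ 2) \<partial>lborel) \<noteq> \<infinity>"
    have "(\<integral>\<^sup>+s. ennreal (norm (Fz s \<omega>)) \<partial>lborel) \<le> (\<integral>\<^sup>+s. indicator {0..T} s + indicator {0..T} s * ennreal (norm (Fz s \<omega>) ^ 2) \<partial>lborel)"
    proof (intro nn_integral_mono)
      fix s
      show "ennreal (norm (Fz s \<omega>)) \<le> indicator {0..T} s + indicator {0..T} s * ennreal (norm (Fz s \<omega>) ^ 2)"
      proof (cases "s \<in> {0..T}")
        case True
        have "norm (Fz s \<omega>) \<le> 1 + norm (Fz s \<omega>) ^ 2"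
        proof (cases "norm (Fz s \<omega>) \<le> 1")
          case True then show ?thesis using zero_le_power2[of "norm (Fz s \<omega>)"] by linarith
        next
          case False
          then have "norm (Fz s \<omega>) * 1 \<le> norm (Fz s \<omega>) * norm (Fz s \<omega>)"
            by (intro mult_left_mono) auto
          then show ?thesis by (simp add: power2_eq_square)
        qed
        then have "ennreal (norm (Fz s \<omega>)) \<le> ennreal (1 + norm (Fz s \<omega>) ^ 2)" by (rule ennreal_leI)
        then show ?thesis using True by (simp add: ennreal_plus)
      qed (simp add: Fzero)
    qed
    also have "\<dots> = emeasure lborel {0..T} + (\<integral>\<^sup>+s. indicator {0..T} s * ennreal (norm (Fz s \<omega>) ^ 2) \<partial>lborel)"
      using \<omega> by (subst nn_integral_add) auto
    also have "\<dots> < \<infinity>" using fin T_pos by (simp add: less_top emeasure_lborel_Icc_eq)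
    finally show "integrable lborel (\<lambda>s. Fz s \<omega>)"
      using \<omega> by (intro integrableI_bounded) auto
  qed
qed

lemma integrable_scaled:
  assumes "integrable lborel (\<lambda>s. Fz s \<omega>)" "\<psi> \<in> borel_measurable lborel" "\<And>s. \<bar>\<psi> s\<bar> \<le> c"
  shows "integrable lborel (\<lambda>s. \<psi> s *\<^sub>R Fz s \<omega>)"
proof (rule Bochner_Integration.integrable_bound[of _ "\<lambda>s. c *\<^sub>R Fz s \<omega>"])
  show "integrable lborel (\<lambda>s. c *\<^sub>R Fz s \<omega>)" using assms(1) by simp
  show "(\<lambda>s. \<psi> s *\<^sub>R Fz s \<omega>) \<in> borel_measurable lborel"
    using assms(1,2) by (intro borel_measurable_scaleR) (auto dest: borel_measurable_integrable)
  have "c \<ge> 0" using assms(3)[of 0] by simp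
  then show "AE s in lborel. norm (\<psi> s *\<^sub>R Fz s \<omega>) \<le> norm (c *\<^sub>R Fz s \<omega>)"
    using assms(3) by (intro AE_I2) (simp add: mult_right_mono)
qed

lemma Exp_bound:
  assumes [measurable]: "\<psi> \<in> borel_measurable lborel" "C \<in> sets lborel" and CT: "C \<subseteq> {0..T}"
    and z: "\<And>s. s \<notin> C \<Longrightarrow> \<psi> s = 0"
  shows "(\<integral>\<^sup>+\<omega>. ennreal (norm (\<integral>s. \<psi> s *\<^sub>R Fz s \<omega> \<partial>lborel) ^ 2) \<partial>M)
    \<le> (\<integral>\<^sup>+ s. ennreal ((\<psi> s)^2) \<partial>lborel) * (emeasure lborel C * ennreal K0)"
proof -
  have "(\<integral>\<^sup>+\<omega>. ennreal (norm (\<integral>s. \<psi> s *\<^sub>R Fz s \<omega> \<partial>lborel) ^ 2) \<partial>M)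
     \<le> (\<integral>\<^sup>+\<omega>. (\<integral>\<^sup>+ s. ennreal ((\<psi> s)^2) \<partial>lborel) * (\<integral>\<^sup>+ s. indicator C s * ennreal (norm (Fz s \<omega>) ^ 2) \<partial>lborel) \<partial>M)"
    by (intro nn_integral_mono cs_int) (use assms(2) in \<open>auto intro: z\<close>)
  also have "\<dots> = (\<integral>\<^sup>+ s. ennreal ((\<psi> s)^2) \<partial>lborel) * (\<integral>\<^sup>+\<omega>. (\<integral>\<^sup>+ s. indicator C s * ennreal (norm (Fz s \<omega>) ^ 2) \<partial>lborel) \<partial>M)"
    by (intro nn_integral_cmult) measurable
  also have "\<dots> \<le> (\<integral>\<^sup>+ s. ennreal ((\<psi> s)^2) \<partial>lborel) * (emeasure lborel C * ennreal K0)"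
    by (intro mult_left_mono cell_bound CT) (use assms(2) in auto)
  finally show ?thesis .
qed

end



context core_setup
begin

lemma core_exists:
  assumes \<rho>: "0 < \<rho>" "\<rho> < 1" and \<eta>: "\<eta> > 0"
  shows "\<exists>I. I \<in> sets borel \<and> I \<subseteq> {0..T} \<and> measure lborel I = \<rho> * T \<and>
    (\<forall>t\<in>{0..T}. (\<integral>\<^sup>+\<omega>. ennreal (norm (\<integral>s. (indicator {0..t} s * (\<rho> - indicator I s)) *\<^sub>R Fz s \<omega> \<partial>lborel) ^ 2) \<partial>M) \<le> ennreal \<eta>)"
proof -
  define m :: nat where "m = nat \<lceil>12 * T^2 * K0 / \<eta>\<rceil> + 1"
  have m_pos: "m > 0" "real m > 0" by (auto simp: m_def)
  have m_big: "12 * T^2 * K0 / real m \<le> \<eta>"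
  proof -
    have "12 * T^2 * K0 / \<eta> \<le> real m" unfolding m_def by linarith
    then have "12 * T^2 * K0 \<le> \<eta> * real m" using \<eta> by (simp add: divide_le_eq mult.commute)
    then show ?thesis using m_pos by (simp add: divide_le_eq mult.commute)
  qed
  define w where "w = T / (real m * real m)"
  define h where "h = T / real m"
  have w_pos: "w > 0" and h_pos: "h > 0" using T_pos m_pos by (auto simp: w_def h_def)
  have hw: "h = real m * w" using m_pos by (simp add: w_def h_def)
  have mh: "real m * h = T" using m_pos by (simp add: h_def)
  define q :: nat where "q = nat \<lfloor>\<rho> * real m\<rfloor>"
  have q_le: "real q \<le> \<rho> * real m" and q_gt: "\<rho> * real m < real q + 1"
    using \<rho> by (auto simp: q_def)
  have q_m: "q < m"
  proof -
    have "\<rho> * real m < real m" using \<rho> m_pos by simp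
    then have "real q < real m" using q_le by linarith
    then show ?thesis by simp
  qed
  define \<rho>' where "\<rho>' = real q / real m"
  have \<rho>'_ge: "0 \<le> \<rho>'" and \<rho>'_le: "\<rho>' \<le> 1" using q_m m_pos by (auto simp: \<rho>'_def)
  have \<delta>_ge: "0 \<le> \<rho> - \<rho>'" using q_le m_pos by (simp add: \<rho>'_def divide_le_eq mult.commute)
  have \<delta>_lt: "\<rho> - \<rho>' < 1 / real m"
  proof -
    have "\<rho> - \<rho>' = (\<rho> * real m - real q) / real m" using m_pos by (simp add: \<rho>'_def field_simps)
    also have "\<dots> < 1 / real m" using q_gt m_pos by (intro divide_strict_right_mono) auto
    finally show ?thesis .
  qed
  have sq\<rho>1: "(\<rho>' - 1) * (\<rho>' - 1) \<le> 1"
  proof -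
    have "(\<rho>' - 1) * (\<rho>' - 1) = (1 - \<rho>') * (1 - \<rho>')" by algebra
    also have "\<dots> \<le> 1" using \<rho>'_ge \<rho>'_le by (intro mult_le_one) auto
    finally show ?thesis .
  qed
  have sq\<rho>2: "\<rho>' * \<rho>' \<le> 1" using \<rho>'_ge \<rho>'_le by (intro mult_le_one) auto
  have m\<rho>': "real m * \<rho>' = real q" using m_pos by (simp add: \<rho>'_def)
  define ix where "ix s = nat \<lfloor>s / w\<rfloor>" for s
  define Gs where "Gs Q = {s. 0 \<le> s \<and> nat \<lfloor>s / w\<rfloor> \<in> Q}" for Q
  have Gs_borel[measurable]: "Gs Q \<in> sets borel" for Q unfolding Gs_def by (rule grid_borel[OF w_pos])
  have Gs_lborel[measurable]: "Gs Q \<in> sets lborel" for Q using Gs_borel by simp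
  have Gs_mem: "s \<in> Gs Q \<longleftrightarrow> 0 \<le> s \<and> ix s \<in> Q" for s Q by (simp add: Gs_def ix_def)
  define Cell where "Cell k = Gs {p. p div m = k}" for k
  define A where "A k j = Gs {p. p div m = k \<and> (p mod m + j) mod m < q}" for k j
  define Ip where "Ip c = Gs {p. p div m < m \<and> (p mod m + c (p div m)) mod m < q}" for c
  define Lo where "Lo K = Gs {p. p div m < K}" for K
  have Lo_iff: "s \<in> Lo K \<longleftrightarrow> 0 \<le> s \<and> s < real K * h" for s K
  proof (cases "0 \<le> s")
    case True
    have "ix s div m < K \<longleftrightarrow> ix s < K * m" using m_pos by (simp add: div_less_iff_less_mult)
    also have "\<dots> \<longleftrightarrow> s < real (K * m) * w" unfolding ix_def by (rule ix_less[OF w_pos True])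
    also have "real (K * m) * w = real K * h" by (simp add: hw)
    finally show ?thesis using True by (simp add: Lo_def Gs_mem)
  qed (simp add: Lo_def Gs_mem)
  have Cell_sub: "k < m \<Longrightarrow> Cell k \<subseteq> {0..T}" for k
  proof
    fix s assume k: "k < m" and s: "s \<in> Cell k"
    then have "s \<in> Lo m" by (auto simp: Cell_def Lo_def Gs_mem)
    then show "s \<in> {0..T}" using mh by (auto simp: Lo_iff)
  qed
  have Ip_sub: "Ip c \<subseteq> {0..T}" for c
  proof
    fix s assume s: "s \<in> Ip c"
    then have "s \<in> Lo m" by (auto simp: Ip_def Lo_def Gs_mem)
    then show "s \<in> {0..T}" using mh by (auto simp: Lo_iff)
  qed
  have Cell_meas: "emeasure lborel (Cell k) = ennreal h" for k
  proof -
    have eqQ: "{p. p div m = k} = {k * m..<Suc k * m}"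
    proof (rule set_eqI)
      fix p
      have "(p div m = k) = (k \<le> p div m \<and> p div m < Suc k)" by auto
      also have "\<dots> = (k * m \<le> p \<and> p < Suc k * m)"
        using m_pos by (simp add: less_eq_div_iff_mult_less_eq div_less_iff_less_mult)
      finally show "p \<in> {p. p div m = k} \<longleftrightarrow> p \<in> {k * m..<Suc k * m}" by simp
    qed
    have "measure lborel (Cell k) = real (card {p. p div m = k}) * w"
      unfolding Cell_def Gs_def by (rule measure_grid[OF w_pos]) (simp add: eqQ)
    also have "\<dots> = h" by (simp add: eqQ hw)
    finally have mc: "measure lborel (Cell k) = h" .
    have "Cell k \<subseteq> Lo (Suc k)" by (auto simp: Cell_def Lo_def Gs_mem)
    also have "Lo (Suc k) \<subseteq> {0..real (Suc k) * h}" by (auto simp: Lo_iff)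
    finally have "emeasure lborel (Cell k) \<le> emeasure lborel {0..real (Suc k) * h}"
      by (intro emeasure_mono) auto
    then have "emeasure lborel (Cell k) \<noteq> \<infinity>" by (auto simp: emeasure_lborel_Icc_eq top_unique)
    then show ?thesis using mc by (simp add: emeasure_eq_ennreal_measure)
  qed
  have Ip_measure: "measure lborel (Ip c) = \<rho>' * T" for c
  proof -
    have "measure lborel (Ip c) = real (card {p. p div m < m \<and> (p mod m + c (p div m)) mod m < q}) * w"
      unfolding Ip_def Gs_def
    proof (rule measure_grid[OF w_pos])
      have "{p. p div m < m \<and> (p mod m + c (p div m)) mod m < q} \<subseteq> {..<m*m}"
        using m_pos by (auto simp: div_less_iff_less_mult)
      then show "finite {p. p div m < m \<and> (p mod m + c (p div m)) mod m < q}" by (rule finite_subset) simp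
    qed
    also have "\<dots> = real (m * q) * w" using card_Ip[of q m c] q_m m_pos by simp
    also have "\<dots> = \<rho>' * T" using m_pos by (simp add: \<rho>'_def w_def field_simps)
    finally show ?thesis .
  qed
  define good where "good \<omega> \<longleftrightarrow> integrable lborel (\<lambda>s. Fz s \<omega>)" for \<omega>
  have AEgood: "AE \<omega> in M. good \<omega>" using good_AE by (simp add: good_def)
  define E where "E f = (\<integral>\<^sup>+\<omega>. ennreal (norm (f \<omega>) ^ 2) \<partial>M)" for f :: "'a \<Rightarrow> 'b"
  have lin: "(\<integral>s. (\<psi>1 s + \<psi>2 s) *\<^sub>R Fz s \<omega> \<partial>lborel) = (\<integral>s. \<psi>1 s *\<^sub>R Fz s \<omega> \<partial>lborel) + (\<integral>s. \<psi>2 s *\<^sub>R Fz s \<omega> \<partial>lborel)"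
    if "good \<omega>" "\<psi>1 \<in> borel_measurable lborel" "\<psi>2 \<in> borel_measurable lborel"
       "\<And>s. \<bar>\<psi>1 s\<bar> \<le> 2" "\<And>s. \<bar>\<psi>2 s\<bar> \<le> 2" for \<psi>1 \<psi>2 \<omega>
  proof -
    have i1: "integrable lborel (\<lambda>s. \<psi>1 s *\<^sub>R Fz s \<omega>)"
      by (rule integrable_scaled) (use that in \<open>auto simp: good_def\<close>)
    have i2: "integrable lborel (\<lambda>s. \<psi>2 s *\<^sub>R Fz s \<omega>)"
      by (rule integrable_scaled) (use that in \<open>auto simp: good_def\<close>)
    show ?thesis using Bochner_Integration.integral_add[OF i1 i2] by (simp add: scaleR_add_left)
  qed
  have Ebound: "E (\<lambda>\<omega>. \<integral>s. \<psi> s *\<^sub>R Fz s \<omega> \<partial>lborel) \<le> emeasure lborel C * (emeasure lborel C * ennreal K0)"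
    if [measurable]: "\<psi> \<in> borel_measurable lborel" "C \<in> sets lborel" and CT: "C \<subseteq> {0..T}"
      and z: "\<And>s. s \<notin> C \<Longrightarrow> \<psi> s = 0" and sq: "\<And>s. (\<psi> s)^2 \<le> 1" for \<psi> C
  proof -
    have "E (\<lambda>\<omega>. \<integral>s. \<psi> s *\<^sub>R Fz s \<omega> \<partial>lborel) \<le> (\<integral>\<^sup>+ s. ennreal ((\<psi> s)^2) \<partial>lborel) * (emeasure lborel C * ennreal K0)"
      unfolding E_def by (rule Exp_bound) (use that in auto)
    also have "(\<integral>\<^sup>+ s. ennreal ((\<psi> s)^2) \<partial>lborel) \<le> (\<integral>\<^sup>+ s. indicator C s \<partial>lborel)"
      by (intro nn_integral_mono) (use z sq in \<open>auto simp: indicator_def\<close>)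
    also have "\<dots> = emeasure lborel C" by (rule nn_integral_indicator) (use that(2) in simp)
    finally show ?thesis by (simp add: mult_right_mono)
  qed
  define Sf where "Sf c K \<omega> = (\<integral>s. (indicator (Lo K) s * (\<rho>' - indicator (Ip c) s)) *\<^sub>R Fz s \<omega> \<partial>lborel)" for c K \<omega>
  define Df where "Df K j \<omega> = (\<integral>s. (indicator (Cell K) s * (\<rho>' - indicator (A K j) s)) *\<^sub>R Fz s \<omega> \<partial>lborel)" for K j \<omega>
  have Sf_meas[measurable]: "Sf c K \<in> borel_measurable M" for c K
    unfolding Sf_def Lo_def Ip_def by measurable
  have Df_meas[measurable]: "Df K j \<in> borel_measurable M" for K j
    unfolding Df_def Cell_def A_def by measurable
  have ED: "E (Df K j) \<le> ennreal (h * h * K0)" if "K < m" for K j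
  proof -
    have "E (Df K j) \<le> emeasure lborel (Cell K) * (emeasure lborel (Cell K) * ennreal K0)"
      unfolding Df_def
    proof (rule Ebound)
      show "\<And>s. (indicator (Cell K) s * (\<rho>' - indicator (A K j) s))^2 \<le> 1"
        using sq\<rho>1 sq\<rho>2 by (auto simp: indicator_def power2_eq_square)
    qed (use Cell_sub[OF that] in \<open>auto simp: Cell_def A_def\<close>)
    also have "\<dots> = ennreal (h * h * K0)" using h_pos K0 by (simp add: Cell_meas ennreal_mult mult.assoc)
    finally show ?thesis .
  qed
  have set_meas[measurable]: "Lo K \<in> sets borel" "Ip c \<in> sets borel" "Cell K \<in> sets borel" "A K j \<in> sets borel" for K c j
    by (simp_all add: Lo_def Ip_def Cell_def A_def)
  have sumA: "(\<Sum>j<m. indicator (A K j) s :: real) = real q * indicator (Cell K) s" for K s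
  proof (cases "s \<in> Cell K")
    case True
    then have s0: "0 \<le> s" "ix s div m = K" by (auto simp: Cell_def Gs_mem)
    have "(\<Sum>j<m. indicator (A K j) s :: real) = (\<Sum>j\<in>{..<m}. if (ix s mod m + j) mod m < q then 1 else 0)"
      by (intro sum.cong refl) (simp add: A_def Gs_mem s0 indicator_def)
    also have "\<dots> = real (card {j\<in>{..<m}. (ix s mod m + j) mod m < q})"
      by (simp add: sum.inter_filter[symmetric])
    also have "\<dots> = real q" using card_cyclic[of "ix s mod m" m q] m_pos q_m by simp
    finally show ?thesis using True by simp
  next
    case False
    then have "s \<notin> A K j" for j by (auto simp: A_def Cell_def Gs_mem)
    with False show ?thesis by simp
  qed
  have greedy: "K \<le> m \<Longrightarrow> \<exists>c. \<forall>k\<le>K. E (Sf c k) \<le> ennreal (real k * (h * h * K0))" for K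
  proof (induction K)
    case 0
    have "Lo 0 = {}" by (simp add: Lo_def Gs_def)
    then have "Sf c 0 = (\<lambda>\<omega>. 0)" for c by (simp add: Sf_def fun_eq_iff)
    then show ?case by (auto simp: E_def)
  next
    case (Suc K)
    then have K: "K < m" "K \<le> m" by auto
    obtain c where c: "\<forall>k\<le>K. E (Sf c k) \<le> ennreal (real k * (h * h * K0))" using Suc.IH K by auto
    define c' where "c' j = c(K := j)" for j
    have same: "Sf (c' j) k = Sf c k" if "k \<le> K" for j k
    proof -
      have eqs: "indicator (Lo k) s * (\<rho>' - indicator (Ip (c' j)) s) = indicator (Lo k) s * (\<rho>' - indicator (Ip c) s)" for s
      proof (cases "s \<in> Lo k")
        case True
        then have "ix s div m < k" "0 \<le> s" by (auto simp: Lo_def Gs_mem)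
        then have "c' j (ix s div m) = c (ix s div m)" using that by (auto simp: c'_def)
        then have "s \<in> Ip (c' j) \<longleftrightarrow> s \<in> Ip c" by (simp add: Ip_def Gs_mem)
        then show ?thesis by (simp add: indicator_def)
      qed simp
      show ?thesis unfolding Sf_def by (simp only: eqs)
    qed
    have split: "Sf (c' j) (Suc K) \<omega> = Sf c K \<omega> + Df K j \<omega>" if "good \<omega>" for j \<omega>
    proof -
      have eqs: "indicator (Lo (Suc K)) s * (\<rho>' - indicator (Ip (c' j)) s) = indicator (Lo K) s * (\<rho>' - indicator (Ip c) s) + indicator (Cell K) s * (\<rho>' - indicator (A K j) s)" for s
      proof (cases "0 \<le> s")
        case True
        consider "ix s div m < K" | "ix s div m = K" | "ix s div m > K" by linarith
        then show ?thesis
        proof cases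
          case 1 then have "c' j (ix s div m) = c (ix s div m)" by (auto simp: c'_def)
          with 1 True show ?thesis by (simp add: Lo_def Cell_def Ip_def A_def Gs_mem indicator_def)
        next
          case 2 with True K show ?thesis by (simp add: Lo_def Cell_def Ip_def A_def Gs_mem indicator_def c'_def)
        next
          case 3 with True show ?thesis by (simp add: Lo_def Cell_def Ip_def A_def Gs_mem indicator_def)
        qed
      next
        case False then show ?thesis by (simp add: Lo_def Cell_def Ip_def A_def Gs_mem)
      qed
      have "Sf (c' j) (Suc K) \<omega> = (\<integral>s. (indicator (Lo K) s * (\<rho>' - indicator (Ip c) s) + indicator (Cell K) s * (\<rho>' - indicator (A K j) s)) *\<^sub>R Fz s \<omega> \<partial>lborel)"
        unfolding Sf_def by (simp only: eqs)
      also have "\<dots> = Sf c K \<omega> + Df K j \<omega>" unfolding Sf_def Df_def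
        apply (rule lin)
        using that apply simp
          apply measurable
        using \<rho>'_ge \<rho>'_le apply (simp_all add: indicator_def)
        done
      finally show ?thesis .
    qed
    have sumD: "(\<Sum>j<m. Df K j \<omega>) = 0" if "good \<omega>" for \<omega>
    proof -
      have ints: "integrable lborel (\<lambda>s. (indicator (Cell K) s * (\<rho>' - indicator (A K j) s)) *\<^sub>R Fz s \<omega>)" for j
        apply (rule integrable_scaled[where c=2])
        using that apply (simp add: good_def)
         apply measurable
        using \<rho>'_ge \<rho>'_le apply (simp add: indicator_def)
        done
      have "(\<Sum>j<m. Df K j \<omega>) = (\<integral>s. (\<Sum>j<m. (indicator (Cell K) s * (\<rho>' - indicator (A K j) s)) *\<^sub>R Fz s \<omega>) \<partial>lborel)"
        unfolding Df_def by (rule Bochner_Integration.integral_sum[symmetric]) (use ints in auto)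
      also have "\<dots> = integral\<^sup>L (lborel :: real measure) (\<lambda>s. 0)"
      proof (rule Bochner_Integration.integral_cong[OF refl])
        fix s
        have "(\<Sum>j<m. (indicator (Cell K) s * (\<rho>' - indicator (A K j) s)) *\<^sub>R Fz s \<omega>) = (\<Sum>j<m. indicator (Cell K) s * (\<rho>' - indicator (A K j) s)) *\<^sub>R Fz s \<omega>"
          by (rule scaleR_sum_left[symmetric])
        also have "(\<Sum>j<m. indicator (Cell K) s * (\<rho>' - indicator (A K j) s)) = indicator (Cell K) s * (real m * \<rho>' - (\<Sum>j<m. indicator (A K j) s))"
          by (simp add: sum_distrib_left[symmetric] sum_subtractf)
        also have "\<dots> = 0" using sumA[of K s] m\<rho>' by (simp add: indicator_def)
        finally show "(\<Sum>j<m. (indicator (Cell K) s * (\<rho>' - indicator (A K j) s)) *\<^sub>R Fz s \<omega>) = 0" by simp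
      qed
      finally show ?thesis by simp
    qed
    have pw: "(\<Sum>j<m. ennreal (norm (Sf c K \<omega> + Df K j \<omega>)^2)) = ennreal (real m) * ennreal (norm (Sf c K \<omega>)^2) + (\<Sum>j<m. ennreal (norm (Df K j \<omega>)^2))"
      if "good \<omega>" for \<omega>
    proof -
      have "(\<Sum>j<m. norm (Sf c K \<omega> + Df K j \<omega>)^2) = real m * norm (Sf c K \<omega>)^2 + (\<Sum>j<m. norm (Df K j \<omega>)^2)"
        using sum_sq[of "{..<m}" "\<lambda>j. Df K j \<omega>" "Sf c K \<omega>"] sumD[OF that] by simp
      then show ?thesis by (simp add: ennreal_plus ennreal_mult sum_nonneg)
    qed
    have Esum: "(\<Sum>j<m. E (\<lambda>\<omega>. Sf c K \<omega> + Df K j \<omega>)) = ennreal (real m) * E (Sf c K) + (\<Sum>j<m. E (Df K j))"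
    proof -
      have "(\<Sum>j<m. E (\<lambda>\<omega>. Sf c K \<omega> + Df K j \<omega>)) = (\<integral>\<^sup>+\<omega>. (\<Sum>j<m. ennreal (norm (Sf c K \<omega> + Df K j \<omega>)^2)) \<partial>M)"
        unfolding E_def by (rule nn_integral_sum[symmetric]) measurable
      also have "\<dots> = (\<integral>\<^sup>+\<omega>. ennreal (real m) * ennreal (norm (Sf c K \<omega>)^2) + (\<Sum>j<m. ennreal (norm (Df K j \<omega>)^2)) \<partial>M)"
        by (rule nn_integral_cong_AE, rule AE_mp[OF AEgood], rule AE_I2, rule impI, erule pw)
      also have "\<dots> = (\<integral>\<^sup>+\<omega>. ennreal (real m) * ennreal (norm (Sf c K \<omega>)^2) \<partial>M) + (\<integral>\<^sup>+\<omega>. (\<Sum>j<m. ennreal (norm (Df K j \<omega>)^2)) \<partial>M)"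
        by (rule nn_integral_add) measurable
      also have "(\<integral>\<^sup>+\<omega>. ennreal (real m) * ennreal (norm (Sf c K \<omega>)^2) \<partial>M) = ennreal (real m) * E (Sf c K)"
        unfolding E_def by (rule nn_integral_cmult) measurable
      also have "(\<integral>\<^sup>+\<omega>. (\<Sum>j<m. ennreal (norm (Df K j \<omega>)^2)) \<partial>M) = (\<Sum>j<m. E (Df K j))"
        unfolding E_def by (rule nn_integral_sum) measurable
      finally show ?thesis .
    qed
    have hK: "0 \<le> h * h * K0" using h_pos K0 by simp
    have bound: "(\<Sum>j<m. E (\<lambda>\<omega>. Sf c K \<omega> + Df K j \<omega>)) \<le> ennreal (real m) * ennreal (real (Suc K) * (h * h * K0))"
    proof -
      have "(\<Sum>j<m. E (\<lambda>\<omega>. Sf c K \<omega> + Df K j \<omega>)) \<le> ennreal (real m) * ennreal (real K * (h * h * K0)) + (\<Sum>j<m. ennreal (h * h * K0))"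
        unfolding Esum by (intro add_mono mult_left_mono sum_mono ED) (use c K in auto)
      also have "\<dots> = ennreal (real m) * (ennreal (real K * (h * h * K0)) + ennreal (h * h * K0))"
        by (simp add: ennreal_of_nat_eq_real_of_nat distrib_left)
      also have "ennreal (real K * (h * h * K0)) + ennreal (h * h * K0) = ennreal (real (Suc K) * (h * h * K0))"
        using hK K0 h_pos by (subst ennreal_plus[symmetric]) (auto simp: algebra_simps intro!: mult_nonneg_nonneg)
      finally show ?thesis .
    qed
    have "\<exists>j<m. E (\<lambda>\<omega>. Sf c K \<omega> + Df K j \<omega>) \<le> ennreal (real (Suc K) * (h * h * K0))"
    proof -
      define Ej where "Ej j = E (\<lambda>\<omega>. Sf c K \<omega> + Df K j \<omega>)" for j
      have fin: "finite (Ej ` {..<m})" "Ej ` {..<m} \<noteq> {}" using m_pos by auto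
      obtain j0 where j0: "j0 < m" "Ej j0 = Min (Ej ` {..<m})" using Min_in[OF fin] by auto
      have "ennreal (real m) * Ej j0 = (\<Sum>j<m. Ej j0)" by (simp add: ennreal_of_nat_eq_real_of_nat)
      also have "\<dots> \<le> (\<Sum>j<m. Ej j)" by (intro sum_mono) (simp add: j0 fin)
      also have "\<dots> \<le> ennreal (real m) * ennreal (real (Suc K) * (h * h * K0))" using bound by (simp add: Ej_def)
      finally have "Ej j0 \<le> ennreal (real (Suc K) * (h * h * K0))"
        using m_pos by (subst (asm) ennreal_mult_le_mult_iff) auto
      then show ?thesis using j0 by (auto simp: Ej_def)
    qed
    then obtain j where j: "j < m" "E (\<lambda>\<omega>. Sf c K \<omega> + Df K j \<omega>) \<le> ennreal (real (Suc K) * (h * h * K0))"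
      by auto
    show ?case
    proof (intro exI[of _ "c' j"] allI impI)
      fix k assume "k \<le> Suc K"
      then consider "k \<le> K" | "k = Suc K" by linarith
      then show "E (Sf (c' j) k) \<le> ennreal (real k * (h * h * K0))"
      proof cases
        case 1 then show ?thesis using same[OF 1] c by simp
      next
        case 2
        have "E (Sf (c' j) (Suc K)) = E (\<lambda>\<omega>. Sf c K \<omega> + Df K j \<omega>)"
          unfolding E_def by (rule nn_integral_cong_AE, rule AE_mp[OF AEgood], rule AE_I2) (auto simp: split)
        then show ?thesis using 2 j by simp
      qed
    qed
  qed
  obtain c where c: "\<forall>k\<le>m. E (Sf c k) \<le> ennreal (real k * (h * h * K0))" using greedy[of m] by auto
  have hK0: "0 \<le> h * K0" using h_pos K0 by simp
  have cS: "E (Sf c k) \<le> ennreal (T * h * K0)" if "k \<le> m" for k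
  proof -
    have "real k * (h * h * K0) \<le> real m * (h * h * K0)"
      using that h_pos K0 by (intro mult_right_mono) auto
    also have "\<dots> = T * h * K0" using mh by (simp add: algebra_simps)
    finally show ?thesis using c that by (meson ennreal_leI order_trans)
  qed
  define I' where "I' = Ip c"
  have I'_b[measurable]: "I' \<in> sets borel" and I'_sub: "I' \<subseteq> {0..T}" and I'_m: "measure lborel I' = \<rho>' * T"
    using Ip_sub Ip_measure by (auto simp: I'_def)
  have fill: "0 \<le> (\<rho> - \<rho>') * T" "(\<rho> - \<rho>') * T \<le> T - measure lborel I'"
    using \<delta>_ge T_pos \<rho> by (auto simp: I'_m algebra_simps intro: mult_nonneg_nonneg)
  obtain J where J: "J \<in> sets borel" "J \<subseteq> {0..T}" "J \<inter> I' = {}" "measure lborel J = (\<rho> - \<rho>') * T"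
    using fill_set[OF T_pos I'_b I'_sub fill] by blast
  note J_b[measurable] = J(1)
  have fin_em: "emeasure lborel B \<noteq> \<infinity>" if "B \<subseteq> {0..T}" for B
  proof -
    have "emeasure lborel B \<le> emeasure lborel {0..T}" using that by (intro emeasure_mono) auto
    then show ?thesis by (auto simp: emeasure_lborel_Icc_eq top_unique)
  qed
  define I where "I = I' \<union> J"
  have I_b: "I \<in> sets borel" and I_sub: "I \<subseteq> {0..T}" using J I'_sub by (auto simp: I_def)
  have I_m: "measure lborel I = \<rho> * T"
  proof -
    have "measure lborel I = measure lborel I' + measure lborel J"
      unfolding I_def by (rule measure_Union) (use fin_em I'_sub J in auto)
    then show ?thesis by (simp add: I'_m J algebra_simps)
  qed
  have indI: "indicator I s = (indicator I' s + indicator J s :: real)" for s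
    using J(3) by (auto simp: I_def indicator_def)
  have "1 / real m \<le> 1" using m_pos by (simp add: divide_le_eq_1)
  then have \<delta>1: "\<rho> - \<rho>' < 1" using \<delta>_lt by linarith
  have main: "E (\<lambda>\<omega>. \<integral>s. (indicator {0..t} s * (\<rho> - indicator I s)) *\<^sub>R Fz s \<omega> \<partial>lborel) \<le> ennreal \<eta>"
    if t: "t \<in> {0..T}" for t
  proof -
    define K where "K = min (nat \<lfloor>t / h\<rfloor>) (m - 1)"
    have Km: "K < m" using m_pos by (simp add: K_def)
    have Kt: "real K * h \<le> t"
    proof -
      have t0: "0 \<le> t / h" using t h_pos by auto
      have "real (nat \<lfloor>t / h\<rfloor>) \<le> t / h" using t0 by (rule of_nat_floor)
      then have "real (nat \<lfloor>t / h\<rfloor>) * h \<le> t" using h_pos by (simp add: le_divide_eq)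
      moreover have "real K \<le> real (nat \<lfloor>t / h\<rfloor>)" by (simp add: K_def)
      ultimately show ?thesis using h_pos by (meson mult_right_mono less_imp_le order_trans)
    qed
    have tK: "t \<le> real (Suc K) * h"
    proof (cases "nat \<lfloor>t / h\<rfloor> \<le> m - 1")
      case True
      then have "K = nat \<lfloor>t / h\<rfloor>" by (simp add: K_def)
      moreover have "t / h < real (nat \<lfloor>t / h\<rfloor>) + 1" using t by linarith
      ultimately show ?thesis using h_pos by (simp add: divide_less_eq algebra_simps)
    next
      case False
      then have "K = m - 1" by (simp add: K_def)
      then have "real (Suc K) * h = T" using m_pos mh by (simp add: of_nat_diff)
      then show ?thesis using t by simp
    qed
    define \<psi>0 where "\<psi>0 s = indicator (Lo K) s * (\<rho>' - indicator I' s)" for s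
    define \<psi>1 where "\<psi>1 s = (indicator {0..t} s - indicator (Lo K) s) * (\<rho>' - indicator I' s)" for s
    define \<psi>2 where "\<psi>2 s = indicator {0..t} s * ((\<rho> - \<rho>') - indicator J s)" for s
    have [measurable]: "\<psi>0 \<in> borel_measurable lborel" "\<psi>1 \<in> borel_measurable lborel" "\<psi>2 \<in> borel_measurable lborel"
      unfolding \<psi>0_def \<psi>1_def \<psi>2_def by measurable
    have b0: "\<bar>\<psi>0 s\<bar> \<le> 1" for s using \<rho>'_ge \<rho>'_le by (simp add: \<psi>0_def indicator_def)
    have b1: "\<bar>\<psi>1 s\<bar> \<le> 1" for s using \<rho>'_ge \<rho>'_le by (simp add: \<psi>1_def indicator_def)
    have b2: "\<bar>\<psi>2 s\<bar> \<le> 1" for s using \<delta>_ge \<delta>1 by (simp add: \<psi>2_def indicator_def)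
    have b01: "\<bar>\<psi>0 s + \<psi>1 s\<bar> \<le> 2" for s using abs_triangle_ineq[of "\<psi>0 s" "\<psi>1 s"] b0[of s] b1[of s] by linarith
    have b0': "\<bar>\<psi>0 s\<bar> \<le> 2" "\<bar>\<psi>1 s\<bar> \<le> 2" "\<bar>\<psi>2 s\<bar> \<le> 2" for s using b0[of s] b1[of s] b2[of s] by linarith+
    have psi_eq: "indicator {0..t} s * (\<rho> - indicator I s) = (\<psi>0 s + \<psi>1 s) + \<psi>2 s" for s
      by (simp add: indI \<psi>0_def \<psi>1_def \<psi>2_def algebra_simps)
    define R1 where "R1 \<omega> = (\<integral>s. \<psi>1 s *\<^sub>R Fz s \<omega> \<partial>lborel)" for \<omega>
    define R2 where "R2 \<omega> = (\<integral>s. \<psi>2 s *\<^sub>R Fz s \<omega> \<partial>lborel)" for \<omega>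
    have [measurable]: "R1 \<in> borel_measurable M" "R2 \<in> borel_measurable M" unfolding R1_def R2_def by measurable
    have decomp: "(\<integral>s. (indicator {0..t} s * (\<rho> - indicator I s)) *\<^sub>R Fz s \<omega> \<partial>lborel) = Sf c K \<omega> + R1 \<omega> + R2 \<omega>"
      if "good \<omega>" for \<omega>
    proof -
      have "(\<integral>s. (indicator {0..t} s * (\<rho> - indicator I s)) *\<^sub>R Fz s \<omega> \<partial>lborel) = (\<integral>s. ((\<psi>0 s + \<psi>1 s) + \<psi>2 s) *\<^sub>R Fz s \<omega> \<partial>lborel)"
        by (simp only: psi_eq)
      also have "\<dots> = (\<integral>s. (\<psi>0 s + \<psi>1 s) *\<^sub>R Fz s \<omega> \<partial>lborel) + R2 \<omega>"
        unfolding R2_def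
        apply (rule lin)
        using that apply simp
          apply measurable
        using b01 b0' apply simp_all
        done
      also have "(\<integral>s. (\<psi>0 s + \<psi>1 s) *\<^sub>R Fz s \<omega> \<partial>lborel) = Sf c K \<omega> + R1 \<omega>"
        unfolding R1_def Sf_def I'_def[symmetric] \<psi>0_def[symmetric]
        apply (rule lin)
        using that apply simp
          apply measurable
        using b0' apply simp_all
        done
      finally show ?thesis .
    qed
    have sq3: "norm (x + y + z)^2 \<le> 3 * (norm x^2 + norm y^2 + norm z^2)" for x y z :: 'b
    proof -
      have "norm (x + y + z) \<le> norm x + norm y + norm z"
        by (metis add_right_mono norm_triangle_ineq order_trans)
      then have "norm (x + y + z)^2 \<le> (norm x + norm y + norm z)^2" by (rule power_mono) simp
      also have "\<dots> \<le> 3 * (norm x^2 + norm y^2 + norm z^2)"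
      proof -
        have "3 * (norm x^2 + norm y^2 + norm z^2) - (norm x + norm y + norm z)^2
            = (norm x - norm y)^2 + (norm y - norm z)^2 + (norm x - norm z)^2"
          by (simp add: power2_eq_square algebra_simps)
        moreover have "0 \<le> (norm x - norm y)^2 + (norm y - norm z)^2 + (norm x - norm z)^2" by simp
        ultimately show ?thesis by linarith
      qed
      finally show ?thesis .
    qed
    have ES: "E (Sf c K) \<le> ennreal (T * h * K0)" using cS Km by simp
    have ER1: "E R1 \<le> ennreal (h * (h * K0))"
    proof -
      have "E R1 \<le> emeasure lborel {real K * h .. t} * (emeasure lborel {real K * h .. t} * ennreal K0)"
        unfolding R1_def
      proof (rule Ebound)
        show "{real K * h .. t} \<subseteq> {0..T}" using t h_pos by auto
        show "\<psi>1 s = 0" if "s \<notin> {real K * h .. t}" for s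
        proof (cases "t < s")
          case True then show ?thesis using Kt by (auto simp: \<psi>1_def Lo_iff indicator_def)
        next
          case False then have "s < real K * h" using that by auto
          then show ?thesis using Kt by (auto simp: \<psi>1_def Lo_iff indicator_def)
        qed
        show "(\<psi>1 s)^2 \<le> 1" for s using b1[of s] by (simp add: abs_square_le_1)
      qed auto
      also have "\<dots> \<le> ennreal h * (ennreal h * ennreal K0)"
      proof -
        have e: "emeasure lborel {real K * h .. t} \<le> ennreal h" using Kt tK by (auto simp: algebra_simps)
        show ?thesis by (rule mult_mono[OF e mult_right_mono[OF e]]) auto
      qed
      also have "\<dots> = ennreal (h * (h * K0))" using h_pos K0 by (simp add: ennreal_mult)
      finally show ?thesis .
    qed
    have ER2: "E R2 \<le> ennreal (2 * T / real m * (T * K0))"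
    proof -
      have "E R2 \<le> (\<integral>\<^sup>+ s. ennreal ((\<psi>2 s)^2) \<partial>lborel) * (emeasure lborel {0..T} * ennreal K0)"
        unfolding R2_def E_def by (rule Exp_bound) (use t in \<open>auto simp: \<psi>2_def\<close>)
      also have "(\<integral>\<^sup>+ s. ennreal ((\<psi>2 s)^2) \<partial>lborel) \<le> (\<integral>\<^sup>+ s. ennreal ((\<rho> - \<rho>')^2) * indicator {0..T} s + indicator J s \<partial>lborel)"
      proof (intro nn_integral_mono)
        fix s
        show "ennreal ((\<psi>2 s)^2) \<le> ennreal ((\<rho> - \<rho>')^2) * indicator {0..T} s + indicator J s"
        proof (cases "s \<in> J")
          case True
          have "(\<psi>2 s)^2 \<le> 1" using b2[of s] by (simp add: abs_square_le_1)
          then have a: "ennreal ((\<psi>2 s)^2) \<le> 1" by (metis ennreal_1 ennreal_leI)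
          have b: "(1::ennreal) \<le> ennreal ((\<rho> - \<rho>')^2) * indicator {0..T} s + 1" by (simp add: add_increasing)
          from a b have "ennreal ((\<psi>2 s)^2) \<le> ennreal ((\<rho> - \<rho>')^2) * indicator {0..T} s + 1" by (rule order_trans)
          then show ?thesis using True by simp
        next
          case False
          then have "(\<psi>2 s)^2 \<le> (\<rho> - \<rho>')^2 * indicator {0..T} s" using t
            by (auto simp: \<psi>2_def indicator_def power2_eq_square)
          then have "ennreal ((\<psi>2 s)^2) \<le> ennreal ((\<rho> - \<rho>')^2 * indicator {0..T} s)" by (rule ennreal_leI)
          moreover have e: "ennreal ((\<rho> - \<rho>')^2 * indicator {0..T} s) = ennreal ((\<rho> - \<rho>')^2) * indicator {0..T} s"
            by (cases "s \<in> {0..T}") auto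
          ultimately have "ennreal ((\<psi>2 s)^2) \<le> ennreal ((\<rho> - \<rho>')^2) * indicator {0..T} s" by simp
          then show ?thesis using False by (metis add.right_neutral indicator_simps(2))
        qed
      qed
      also have "\<dots> = ennreal ((\<rho> - \<rho>')^2) * emeasure lborel {0..T} + emeasure lborel J"
        by (subst nn_integral_add) (auto simp: nn_integral_cmult_indicator J(1))
      also have "\<dots> = ennreal ((\<rho> - \<rho>')^2 * T + (\<rho> - \<rho>') * T)"
      proof -
        have "emeasure lborel J = ennreal ((\<rho> - \<rho>') * T)"
          using fin_em[OF J(2)] J(4) by (simp add: emeasure_eq_ennreal_measure)
        then show ?thesis using T_pos \<delta>_ge by (simp add: ennreal_mult ennreal_plus)
      qed
      also have "\<dots> \<le> ennreal (2 * T / real m)"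
      proof (rule ennreal_leI)
        have "(\<rho> - \<rho>') * (\<rho> - \<rho>') \<le> (\<rho> - \<rho>')" by (rule mult_right_le_one_le) (use \<delta>_ge \<delta>1 in auto)
        then have "(\<rho> - \<rho>')^2 \<le> (\<rho> - \<rho>')" by (simp add: power2_eq_square)
        then have "(\<rho> - \<rho>')^2 + (\<rho> - \<rho>') \<le> 2 / real m" using \<delta>_lt by simp
        then have "((\<rho> - \<rho>')^2 + (\<rho> - \<rho>')) * T \<le> 2 / real m * T" using T_pos by (intro mult_right_mono) auto
        then show "(\<rho> - \<rho>')^2 * T + (\<rho> - \<rho>') * T \<le> 2 * T / real m" by (simp add: algebra_simps)
      qed
      finally have "E R2 \<le> ennreal (2 * T / real m) * (ennreal T * ennreal K0)"
        using T_pos by (simp add: mult_right_mono)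
      also have "\<dots> = ennreal (2 * T / real m * (T * K0))"
      proof -
        have a: "ennreal (T * K0) = ennreal T * ennreal K0" by (rule ennreal_mult) (use T_pos K0 in auto)
        have b: "ennreal (2 * T / real m * (T * K0)) = ennreal (2 * T / real m) * ennreal (T * K0)"
          by (rule ennreal_mult) (use T_pos K0 m_pos in auto)
        show ?thesis unfolding b a ..
      qed
      finally show ?thesis .
    qed
    have "E (\<lambda>\<omega>. \<integral>s. (indicator {0..t} s * (\<rho> - indicator I s)) *\<^sub>R Fz s \<omega> \<partial>lborel)
       \<le> (\<integral>\<^sup>+\<omega>. ennreal 3 * (ennreal (norm (Sf c K \<omega>)^2) + ennreal (norm (R1 \<omega>)^2) + ennreal (norm (R2 \<omega>)^2)) \<partial>M)"
      unfolding E_def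
    proof (rule nn_integral_mono_AE, rule AE_mp[OF AEgood], rule AE_I2, rule impI)
      fix \<omega> assume "good \<omega>"
      then have "norm (\<integral>s. (indicator {0..t} s * (\<rho> - indicator I s)) *\<^sub>R Fz s \<omega> \<partial>lborel)^2
          \<le> 3 * (norm (Sf c K \<omega>)^2 + norm (R1 \<omega>)^2 + norm (R2 \<omega>)^2)"
        using decomp sq3 by simp
      then show "ennreal (norm (\<integral>s. (indicator {0..t} s * (\<rho> - indicator I s)) *\<^sub>R Fz s \<omega> \<partial>lborel)^2)
          \<le> ennreal 3 * (ennreal (norm (Sf c K \<omega>)^2) + ennreal (norm (R1 \<omega>)^2) + ennreal (norm (R2 \<omega>)^2))"
      proof -
        have eq: "ennreal 3 * (ennreal (norm (Sf c K \<omega>)^2) + ennreal (norm (R1 \<omega>)^2) + ennreal (norm (R2 \<omega>)^2))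
          = ennreal (3 * (norm (Sf c K \<omega>)^2 + norm (R1 \<omega>)^2 + norm (R2 \<omega>)^2))"
          by (simp add: ennreal_mult ennreal_plus)
        show ?thesis unfolding eq by (rule ennreal_leI) fact
      qed
    qed
    also have "\<dots> = ennreal 3 * (E (Sf c K) + E R1 + E R2)"
      unfolding E_def by (subst nn_integral_cmult) (auto simp: nn_integral_add)
    also have "\<dots> \<le> ennreal 3 * (ennreal (T * h * K0) + ennreal (h * (h * K0)) + ennreal (2 * T / real m * (T * K0)))"
      by (intro mult_left_mono add_mono ES ER1 ER2) auto
    also have "\<dots> = ennreal (3 * (T * h * K0 + h * (h * K0) + 2 * T / real m * (T * K0)))"
    proof -
      have n1: "0 \<le> T * h * K0" and n2: "0 \<le> h * (h * K0)" and n3: "0 \<le> 2 * T / real m * (T * K0)"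
        using T_pos h_pos K0 m_pos by auto
      have "ennreal (T * h * K0) + ennreal (h * (h * K0)) + ennreal (2 * T / real m * (T * K0))
          = ennreal (T * h * K0 + h * (h * K0) + 2 * T / real m * (T * K0))"
        using n1 n2 n3 by (simp add: ennreal_plus)
      moreover have "ennreal 3 * ennreal (T * h * K0 + h * (h * K0) + 2 * T / real m * (T * K0))
          = ennreal (3 * (T * h * K0 + h * (h * K0) + 2 * T / real m * (T * K0)))"
        by (rule ennreal_mult[symmetric]) (use n1 n2 n3 in auto)
      ultimately show ?thesis by simp
    qed
    also have "\<dots> \<le> ennreal \<eta>"
    proof (rule ennreal_leI)
      define X where "X = T^2 * K0 / real m"
      have X0: "0 \<le> X" using K0 m_pos by (simp add: X_def)
      have e1: "T * h * K0 = X" by (simp add: X_def h_def power2_eq_square)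
      have e2: "h * (h * K0) = X / real m" by (simp add: X_def h_def power2_eq_square)
      have e3: "2 * T / real m * (T * K0) = 2 * X" by (simp add: X_def power2_eq_square)
      have "X / real m \<le> X" using X0 m_pos by (simp add: divide_le_eq mult_le_cancel_left1 Suc_leI)
      then have "3 * (T * h * K0 + h * (h * K0) + 2 * T / real m * (T * K0)) \<le> 12 * X"
      proof -
        have "3 * (X + X / real m + 2 * X) = 9 * X + 3 * (X / real m)" by (simp add: algebra_simps)
        then show ?thesis unfolding e1 e2 e3 using \<open>X / real m \<le> X\<close> by linarith
      qed
      also have "12 * X = 12 * T^2 * K0 / real m" by (simp add: X_def)
      finally show "3 * (T * h * K0 + h * (h * K0) + 2 * T / real m * (T * K0)) \<le> \<eta>" using m_big by linarith
    qed
    finally show ?thesis .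
  qed
  show ?thesis
    by (intro exI[of _ I] conjI ballI) (use I_b I_sub I_m main[unfolded E_def] in auto)
qed

end
theorem lemma5p2:
  fixes M :: "'a measure" and T :: real and U :: "(real^'k) set"
    and b :: "real \<Rightarrow> real^'n \<Rightarrow> (real^'n) measure \<Rightarrow> real^'k \<Rightarrow> real^'n"
    and X :: "real \<Rightarrow> 'a \<Rightarrow> real^'n"
    and u v :: "real \<Rightarrow> 'a \<Rightarrow> real^'k"
  assumes T_pos: "T > 0"
    and prob: "prob_space M"
    and b_lip: "\<exists>L. \<forall>t\<in>{0..T}. \<forall>x x' \<mu> \<mu>' w w'. \<mu> \<in> P2 \<longrightarrow> \<mu>' \<in> P2 \<longrightarrow>
        norm (b t x \<mu> w - b t x' \<mu>' w') \<le> L * (norm (x - x') + W2 \<mu> \<mu>' + norm (w - w'))"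
    and X_meas: "\<forall>t\<in>{0..T}. X t \<in> borel_measurable M"
    and X_mom: "\<exists>C::real. \<forall>t\<in>{0..T}. (\<integral>\<^sup>+ \<omega>. ennreal (norm (X t \<omega>) ^ 2) \<partial>M) \<le> ennreal C"
    and u_U: "\<forall>t\<in>{0..T}. \<forall>\<omega>\<in>space M. u t \<omega> \<in> U"
    and v_U: "\<forall>t\<in>{0..T}. \<forall>\<omega>\<in>space M. v t \<omega> \<in> U"
    and u_meas: "\<forall>t\<in>{0..T}. u t \<in> borel_measurable M"
    and v_meas: "\<forall>t\<in>{0..T}. v t \<in> borel_measurable M"
    and u_mom: "\<exists>C::real. \<forall>t\<in>{0..T}. (\<integral>\<^sup>+ \<omega>. ennreal (norm (u t \<omega>) ^ 8) \<partial>M) \<le> ennreal C"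
    and v_mom: "\<exists>C::real. \<forall>t\<in>{0..T}. (\<integral>\<^sup>+ \<omega>. ennreal (norm (v t \<omega>) ^ 8) \<partial>M) \<le> ennreal C"
    and bu_meas: "(\<lambda>(s, \<omega>). b s (X s \<omega>) (law M (X s)) (u s \<omega>))
        \<in> borel_measurable (restrict_space lborel {0..T} \<Otimes>\<^sub>M M)"
    and bv_meas: "(\<lambda>(s, \<omega>). b s (X s \<omega>) (law M (X s)) (v s \<omega>))
        \<in> borel_measurable (restrict_space lborel {0..T} \<Otimes>\<^sub>M M)"
  shows "\<exists>I :: real \<Rightarrow> real set.
    (\<forall>\<rho>\<in>{0<..<1}. I \<rho> \<in> sets borel \<and> I \<rho> \<subseteq> {0..T} \<and> measure lborel (I \<rho>) = \<rho> * T) \<and>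
    (\<forall>\<epsilon>>0. \<exists>\<delta>>0. \<forall>\<rho>\<in>{0<..<1}. \<rho> < \<delta> \<longrightarrow> (\<forall>t\<in>{0..T}.
       (\<integral>\<^sup>+ \<omega>. ennreal ((norm (\<rho> *\<^sub>R (LINT s:{0..t}|lborel. Delta_b M b X u v s \<omega>)
                 - (LINT s:(I \<rho> \<inter> {0..t})|lborel. Delta_b M b X u v s \<omega>))) ^ 2) \<partial>M)
       \<le> ennreal (\<epsilon> * \<rho> ^ 4)))"
proof -
  obtain L where L: "\<forall>t\<in>{0..T}. \<forall>x x' \<mu> \<mu>' w w'. \<mu> \<in> P2 \<longrightarrow> \<mu>' \<in> P2 \<longrightarrow>
        norm (b t x \<mu> w - b t x' \<mu>' w') \<le> L * (norm (x - x') + W2 \<mu> \<mu>' + norm (w - w'))"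
    using b_lip by blast
  define L0 where "L0 = max L 0"
  obtain CX where CX: "\<forall>t\<in>{0..T}. (\<integral>\<^sup>+ \<omega>. ennreal (norm (X t \<omega>) ^ 2) \<partial>M) \<le> ennreal CX" using X_mom by blast
  obtain Cu where Cu: "\<forall>t\<in>{0..T}. (\<integral>\<^sup>+ \<omega>. ennreal (norm (u t \<omega>) ^ 8) \<partial>M) \<le> ennreal Cu" using u_mom by blast
  obtain Cv where Cv: "\<forall>t\<in>{0..T}. (\<integral>\<^sup>+ \<omega>. ennreal (norm (v t \<omega>) ^ 8) \<partial>M) \<le> ennreal Cv" using v_mom by blast
  have lawP2: "law M (X t) \<in> P2" if "t \<in> {0..T}" for t
    using law_P2[OF prob, of "X t" CX] X_meas CX that by auto
  have Dbound: "norm (Delta_b M b X u v t \<omega>) \<le> L0 * norm (v t \<omega> - u t \<omega>)" if "t \<in> {0..T}" for t \<omega>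
  proof -
    have "norm (Delta_b M b X u v t \<omega>) \<le> L * (norm (X t \<omega> - X t \<omega>) + W2 (law M (X t)) (law M (X t)) + norm (v t \<omega> - u t \<omega>))"
      unfolding Delta_b_def using L[rule_format, OF that, where x="X t \<omega>" and x'="X t \<omega>" and \<mu>="law M (X t)" and \<mu>'="law M (X t)" and w="v t \<omega>" and w'="u t \<omega>"] lawP2[OF that] by simp
    also have "\<dots> = L * norm (v t \<omega> - u t \<omega>)" using W2_self[OF lawP2[OF that]] by simp
    also have "\<dots> \<le> L0 * norm (v t \<omega> - u t \<omega>)" by (simp add: L0_def mult_right_mono)
    finally show ?thesis .
  qed
  define Fz where "Fz s \<omega> = indicator {0..T} s *\<^sub>R Delta_b M b X u v s \<omega>" for s \<omega>
  define clamp where "clamp s = max 0 (min T s)" for s :: real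
  have clamp_eq: "s \<in> {0..T} \<Longrightarrow> clamp s = s" for s by (auto simp: clamp_def)
  have pi_meas: "(\<lambda>x. (clamp (snd x), fst x)) \<in> measurable (M \<Otimes>\<^sub>M lborel) (restrict_space lborel {0..T} \<Otimes>\<^sub>M M)"
  proof (rule measurable_Pair)
    show "(\<lambda>x. clamp (snd x)) \<in> measurable (M \<Otimes>\<^sub>M lborel) (restrict_space lborel {0..T})"
    proof (rule measurable_restrict_space2)
      show "(\<lambda>x. clamp (snd x)) \<in> space (M \<Otimes>\<^sub>M lborel) \<rightarrow> {0..T}" using T_pos by (auto simp: clamp_def)
      show "(\<lambda>x. clamp (snd x)) \<in> measurable (M \<Otimes>\<^sub>M lborel) lborel" unfolding clamp_def measurable_lborel2 by measurable
    qed
    show "(\<lambda>x. fst x) \<in> measurable (M \<Otimes>\<^sub>M lborel) M" by measurable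
  qed
  have gu: "(\<lambda>x. (\<lambda>(s, \<omega>). b s (X s \<omega>) (law M (X s)) (u s \<omega>)) (clamp (snd x), fst x)) \<in> borel_measurable (M \<Otimes>\<^sub>M lborel)"
    by (rule measurable_compose[OF pi_meas bu_meas])
  have gv: "(\<lambda>x. (\<lambda>(s, \<omega>). b s (X s \<omega>) (law M (X s)) (v s \<omega>)) (clamp (snd x), fst x)) \<in> borel_measurable (M \<Otimes>\<^sub>M lborel)"
    by (rule measurable_compose[OF pi_meas bv_meas])
  have Fmeas: "(\<lambda>x. Fz (snd x) (fst x)) \<in> borel_measurable (M \<Otimes>\<^sub>M lborel)"
  proof -
    have eq: "Fz (snd x) (fst x) = indicator {0..T} (snd x) *\<^sub>R
       ((\<lambda>(s, \<omega>). b s (X s \<omega>) (law M (X s)) (v s \<omega>)) (clamp (snd x), fst x) -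
        (\<lambda>(s, \<omega>). b s (X s \<omega>) (law M (X s)) (u s \<omega>)) (clamp (snd x), fst x))" for x
      by (cases "snd x \<in> {0..T}") (auto simp: Fz_def Delta_b_def clamp_eq)
    show ?thesis unfolding eq using gu gv by measurable
  qed
  define K0 where "K0 = 2 * L0^2 * (2 + max Cv 0 + max Cu 0)"
  have L0: "0 \<le> L0" by (simp add: L0_def)
  have K0: "0 \<le> K0" unfolding K0_def by (intro mult_nonneg_nonneg) auto
  have sq8: "x^2 \<le> 1 + x^8" if "0 \<le> x" for x :: real
  proof (cases "x \<le> 1")
    case True
    then have "x^2 \<le> 1" using that by (simp add: power_le_one)
    then show ?thesis using zero_le_power[of x 8] that by linarith
  next
    case False
    then have "x^2 \<le> x^8" by (intro power_increasing) auto
    then show ?thesis by linarith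
  qed
  have Fbound: "(\<integral>\<^sup>+\<omega>. ennreal (norm (Fz s \<omega>) ^ 2) \<partial>M) \<le> ennreal K0" if s: "s \<in> {0..T}" for s
  proof -
    have [measurable]: "u s \<in> borel_measurable M" "v s \<in> borel_measurable M" using u_meas v_meas s by auto
    have pw: "norm (Fz s \<omega>) ^ 2 \<le> 2 * L0^2 * (2 + norm (v s \<omega>)^8 + norm (u s \<omega>)^8)" for \<omega>
    proof -
      have "norm (Fz s \<omega>) \<le> L0 * (norm (v s \<omega>) + norm (u s \<omega>))"
        using Dbound[OF s, of \<omega>] norm_triangle_ineq4[of "v s \<omega>" "u s \<omega>"] L0 s
        by (simp add: Fz_def) (meson mult_left_mono order_trans)
      then have "norm (Fz s \<omega>) ^ 2 \<le> (L0 * (norm (v s \<omega>) + norm (u s \<omega>)))^2" by (rule power_mono) simp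
      also have "\<dots> = L0^2 * (norm (v s \<omega>) + norm (u s \<omega>))^2" by (simp add: power_mult_distrib)
      also have "\<dots> \<le> L0^2 * (2 * (norm (v s \<omega>)^2 + norm (u s \<omega>)^2))"
      proof (rule mult_left_mono)
        have "0 \<le> (norm (v s \<omega>) - norm (u s \<omega>))^2" by simp
        then show "(norm (v s \<omega>) + norm (u s \<omega>))^2 \<le> 2 * (norm (v s \<omega>)^2 + norm (u s \<omega>)^2)"
          by (simp add: power2_eq_square algebra_simps)
      qed simp
      also have "\<dots> \<le> L0^2 * (2 * (2 + norm (v s \<omega>)^8 + norm (u s \<omega>)^8))"
        using sq8[of "norm (v s \<omega>)"] sq8[of "norm (u s \<omega>)"] by (intro mult_left_mono) auto
      finally show ?thesis by (simp add: algebra_simps)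
    qed
    have "(\<integral>\<^sup>+\<omega>. ennreal (norm (Fz s \<omega>) ^ 2) \<partial>M) \<le> (\<integral>\<^sup>+\<omega>. ennreal (2 * L0^2) * (2 + ennreal (norm (v s \<omega>)^8) + ennreal (norm (u s \<omega>)^8)) \<partial>M)"
    proof (intro nn_integral_mono)
      fix \<omega>
      have "ennreal (norm (Fz s \<omega>) ^ 2) \<le> ennreal (2 * L0^2 * (2 + norm (v s \<omega>)^8 + norm (u s \<omega>)^8))"
        using pw by (rule ennreal_leI)
      also have "\<dots> = ennreal (2 * L0^2) * (2 + ennreal (norm (v s \<omega>)^8) + ennreal (norm (u s \<omega>)^8))"
        by (simp add: ennreal_mult ennreal_plus)
      finally show "ennreal (norm (Fz s \<omega>) ^ 2) \<le> ennreal (2 * L0^2) * (2 + ennreal (norm (v s \<omega>)^8) + ennreal (norm (u s \<omega>)^8))" .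
    qed
    also have "\<dots> = ennreal (2 * L0^2) * (2 + (\<integral>\<^sup>+\<omega>. ennreal (norm (v s \<omega>)^8) \<partial>M) + (\<integral>\<^sup>+\<omega>. ennreal (norm (u s \<omega>)^8) \<partial>M))"
    proof -
      interpret prob_space M by (rule prob)
      show ?thesis by (subst nn_integral_cmult) (auto simp: nn_integral_add emeasure_space_1)
    qed
    also have "\<dots> \<le> ennreal (2 * L0^2) * (2 + ennreal (max Cv 0) + ennreal (max Cu 0))"
      using Cv Cu s by (intro mult_left_mono add_mono) (auto intro: order_trans ennreal_leI)
    also have "\<dots> = ennreal K0" unfolding K0_def by (simp add: ennreal_mult ennreal_plus)
    finally show ?thesis .
  qed
  interpret C: core_setup M T Fz K0
  proof (rule core_setup.intro)
    show "\<And>s \<omega>. s \<notin> {0..T} \<Longrightarrow> Fz s \<omega> = 0" by (simp add: Fz_def)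
  qed (fact prob T_pos Fmeas K0 Fbound)+
  have ex: "\<forall>\<rho>\<in>{0<..<1}. \<exists>I. I \<in> sets borel \<and> I \<subseteq> {0..T} \<and> measure lborel I = \<rho> * T \<and>
    (\<forall>t\<in>{0..T}. (\<integral>\<^sup>+\<omega>. ennreal (norm (\<integral>s. (indicator {0..t} s * (\<rho> - indicator I s)) *\<^sub>R Fz s \<omega> \<partial>lborel) ^ 2) \<partial>M) \<le> ennreal (\<rho>^5))"
    by (intro ballI C.core_exists) auto
  from bchoice[OF ex] obtain I where I: "\<forall>\<rho>\<in>{0<..<1}. I \<rho> \<in> sets borel \<and> I \<rho> \<subseteq> {0..T} \<and> measure lborel (I \<rho>) = \<rho> * T \<and>
    (\<forall>t\<in>{0..T}. (\<integral>\<^sup>+\<omega>. ennreal (norm (\<integral>s. (indicator {0..t} s * (\<rho> - indicator (I \<rho>) s)) *\<^sub>R Fz s \<omega> \<partial>lborel) ^ 2) \<partial>M) \<le> ennreal (\<rho>^5))"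
    ..
  have conv: "\<rho> *\<^sub>R (LINT s:{0..t}|lborel. Delta_b M b X u v s \<omega>) - (LINT s:(I \<rho> \<inter> {0..t})|lborel. Delta_b M b X u v s \<omega>)
      = (\<integral>s. (indicator {0..t} s * (\<rho> - indicator (I \<rho>) s)) *\<^sub>R Fz s \<omega> \<partial>lborel)"
    if g: "integrable lborel (\<lambda>s. Fz s \<omega>)" and t: "t \<in> {0..T}" and Ib: "I \<rho> \<in> sets borel" for \<rho> t \<omega>
  proof -
    have e1: "(LINT s:{0..t}|lborel. Delta_b M b X u v s \<omega>) = (\<integral>s. indicator {0..t} s *\<^sub>R Fz s \<omega> \<partial>lborel)"
      unfolding set_lebesgue_integral_def using t
      by (intro Bochner_Integration.integral_cong refl) (auto simp: Fz_def indicator_def)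
    have e2: "(LINT s:(I \<rho> \<inter> {0..t})|lborel. Delta_b M b X u v s \<omega>) = (\<integral>s. (indicator {0..t} s * indicator (I \<rho>) s) *\<^sub>R Fz s \<omega> \<partial>lborel)"
      unfolding set_lebesgue_integral_def using t
      by (intro Bochner_Integration.integral_cong refl) (auto simp: Fz_def indicator_def)
    have i1: "integrable lborel (\<lambda>s. indicator {0..t} s *\<^sub>R Fz s \<omega>)"
      by (rule C.integrable_scaled[OF g, where c=1]) auto
    have i2: "integrable lborel (\<lambda>s. (indicator {0..t} s * indicator (I \<rho>) s) *\<^sub>R Fz s \<omega>)"
      by (rule C.integrable_scaled[OF g, where c=1]) (use Ib in \<open>auto simp: indicator_def\<close>)
    have sc: "\<rho> *\<^sub>R (\<integral>s. indicator {0..t} s *\<^sub>R Fz s \<omega> \<partial>lborel) = (\<integral>s. \<rho> *\<^sub>R (indicator {0..t} s *\<^sub>R Fz s \<omega>) \<partial>lborel)"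
      by (rule integral_scaleR_right[symmetric])
    have i1': "integrable lborel (\<lambda>s. \<rho> *\<^sub>R (indicator {0..t} s *\<^sub>R Fz s \<omega>))"
      using i1 by (rule integrable_scaleR_right)
    have "\<rho> *\<^sub>R (LINT s:{0..t}|lborel. Delta_b M b X u v s \<omega>) - (LINT s:(I \<rho> \<inter> {0..t})|lborel. Delta_b M b X u v s \<omega>)
      = (\<integral>s. \<rho> *\<^sub>R (indicator {0..t} s *\<^sub>R Fz s \<omega>) - (indicator {0..t} s * indicator (I \<rho>) s) *\<^sub>R Fz s \<omega> \<partial>lborel)"
      unfolding e1 e2 by (simp only: Bochner_Integration.integral_diff[OF i1' i2] sc)
    also have "\<dots> = (\<integral>s. (indicator {0..t} s * (\<rho> - indicator (I \<rho>) s)) *\<^sub>R Fz s \<omega> \<partial>lborel)"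
      by (intro Bochner_Integration.integral_cong refl) (simp add: algebra_simps scaleR_diff_left)
    finally show ?thesis .
  qed
  show ?thesis
  proof (intro exI[of _ I] conjI)
    show "\<forall>\<rho>\<in>{0<..<1}. I \<rho> \<in> sets borel \<and> I \<rho> \<subseteq> {0..T} \<and> measure lborel (I \<rho>) = \<rho> * T" using I by blast
    show "\<forall>\<epsilon>>0. \<exists>\<delta>>0. \<forall>\<rho>\<in>{0<..<1}. \<rho> < \<delta> \<longrightarrow> (\<forall>t\<in>{0..T}.
       (\<integral>\<^sup>+ \<omega>. ennreal ((norm (\<rho> *\<^sub>R (LINT s:{0..t}|lborel. Delta_b M b X u v s \<omega>)
                 - (LINT s:(I \<rho> \<inter> {0..t})|lborel. Delta_b M b X u v s \<omega>))) ^ 2) \<partial>M)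
       \<le> ennreal (\<epsilon> * \<rho> ^ 4))"
    proof (intro allI impI)
      fix \<epsilon> :: real assume \<epsilon>: "\<epsilon> > 0"
      show "\<exists>\<delta>>0. \<forall>\<rho>\<in>{0<..<1}. \<rho> < \<delta> \<longrightarrow> (\<forall>t\<in>{0..T}.
       (\<integral>\<^sup>+ \<omega>. ennreal ((norm (\<rho> *\<^sub>R (LINT s:{0..t}|lborel. Delta_b M b X u v s \<omega>)
                 - (LINT s:(I \<rho> \<inter> {0..t})|lborel. Delta_b M b X u v s \<omega>))) ^ 2) \<partial>M)
       \<le> ennreal (\<epsilon> * \<rho> ^ 4))"
      proof (intro exI[of _ \<epsilon>] conjI ballI impI)
      show "\<epsilon> > 0" by fact
      fix \<rho> t :: real
      assume \<rho>: "\<rho> \<in> {0<..<1}" and \<rho>\<epsilon>: "\<rho> < \<epsilon>" and t: "t \<in> {0..T}"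
      have Ir: "I \<rho> \<in> sets borel" using I \<rho> by blast
      have "(\<integral>\<^sup>+ \<omega>. ennreal ((norm (\<rho> *\<^sub>R (LINT s:{0..t}|lborel. Delta_b M b X u v s \<omega>)
                 - (LINT s:(I \<rho> \<inter> {0..t})|lborel. Delta_b M b X u v s \<omega>))) ^ 2) \<partial>M)
          = (\<integral>\<^sup>+\<omega>. ennreal (norm (\<integral>s. (indicator {0..t} s * (\<rho> - indicator (I \<rho>) s)) *\<^sub>R Fz s \<omega> \<partial>lborel) ^ 2) \<partial>M)"
        by (rule nn_integral_cong_AE, rule AE_mp[OF C.good_AE], rule AE_I2) (auto simp: conv[OF _ t Ir])
      also have "\<dots> \<le> ennreal (\<rho>^5)" using I \<rho> t by blast
      also have "\<dots> \<le> ennreal (\<epsilon> * \<rho> ^ 4)"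
      proof (rule ennreal_leI)
        have "\<rho> * \<rho>^4 \<le> \<epsilon> * \<rho>^4" using \<rho> \<rho>\<epsilon> by (intro mult_right_mono) auto
        then show "\<rho>^5 \<le> \<epsilon> * \<rho>^4" by (simp add: power_Suc[symmetric] del: power_Suc)
      qed
      finally show "(\<integral>\<^sup>+ \<omega>. ennreal ((norm (\<rho> *\<^sub>R (LINT s:{0..t}|lborel. Delta_b M b X u v s \<omega>)
                 - (LINT s:(I \<rho> \<inter> {0..t})|lborel. Delta_b M b X u v s \<omega>))) ^ 2) \<partial>M)
          \<le> ennreal (\<epsilon> * \<rho> ^ 4)" .
    qed
    qed
  qed
qed

end
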